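(* Let $q$ be a prime power, let $\Gamma$ be a projective bundle in $\mathrm{PG}(2,q)$, let $A$ be the binary point-line incidence matrix of $\mathrm{PG}(2,q)$ and $B$ the binary point-oval incidence matrix of $\Gamma$ (rows indexed by points in the same order), and let $C=\ker(A\mid B)=\{c\in\mathbb{F}_2^{2(q^2+q+1)} : c(A\mid B)^\top=0\}$, so that the coordinates of $C$ are indexed by the lines of $\mathrm{PG}(2,q)$ followed by the ovals of $\Gamma$. Then the minimum distance of $C$ is $q+2$. Moreover, identifying the support of a codeword with a set of lines and ovals of $\Gamma$, the support of every minimum weight codeword of $C$ is: (i) if $q$ is odd, either an oval of $\Gamma$ together with its $q+1$ tangent lines, or a line together with its $q+1$ tangent ovals of $\Gamma$; (ii) if $q$ is even, either a dual hyperoval, or a hyperoval of ovals of $\Gamma$.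
   Context: $\mathrm{PG}(2,q)$ is the projective plane whose points and lines are the 1- and 2-dimensional subspaces of $\mathbb{F}_q^3$; it has $q^2+q+1$ points and lines. An oval is a set of $q+1$ points such that every line meets it in at most two points. A projective bundle is a collection of $q^2+q+1$ ovals of $\mathrm{PG}(2,q)$ any two of which intersect in exactly one point. A line and an oval are tangent if they meet in exactly one point. A dual hyperoval is a set of $q+2$ lines such that every point lies on zero or two of them. A hyperoval of ovals (of $\Gamma$) is a set of $q+2$ ovals of $\Gamma$ such that every point lies on zero or two of them. The minimum distance is the smallest Hamming weight of a nonzero codeword. *)

theory Defs
  imports "HOL-Analysis.Finite_Cartesian_Product"
begin

text \<open>PG(2,F) for a finite field F (the type 'a), q = CARD('a).\<close>

definition pg_points :: "('a::field ^ 3) set set" where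
  "pg_points = {S. \<exists>v. v \<noteq> 0 \<and> S = {c *s v | c. True}}"

definition pg_lines :: "('a::field ^ 3) set set" where
  "pg_lines = {S. \<exists>u v. (\<forall>a b. a *s u + b *s v = 0 \<longrightarrow> a = 0 \<and> b = 0)
                     \<and> S = {a *s u + b *s v | a b. True}}"

definition meet :: "('a::field ^ 3) set set \<Rightarrow> ('a ^ 3) set \<Rightarrow> nat" where
  "meet X L = card {P \<in> X. P \<subseteq> L}"

definition is_oval :: "('a::{finite,field} ^ 3) set set \<Rightarrow> bool" where
  "is_oval X \<longleftrightarrow> X \<subseteq> pg_points \<and> card X = CARD('a) + 1
     \<and> (\<forall>L \<in> pg_lines. meet X L \<le> 2)"

definition projective_bundle :: "('a::{finite,field} ^ 3) set set set \<Rightarrow> bool" where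
  "projective_bundle \<Gamma> \<longleftrightarrow> (\<forall>X \<in> \<Gamma>. is_oval X)
     \<and> card \<Gamma> = CARD('a)^2 + CARD('a) + 1
     \<and> (\<forall>X1 \<in> \<Gamma>. \<forall>X2 \<in> \<Gamma>. X1 \<noteq> X2 \<longrightarrow> card (X1 \<inter> X2) = 1)"

text \<open>A binary codeword of C = ker(A|B) is identified with its support: a set Ls of lines
  (coordinates indexed by lines) and a set Os of ovals of \<Gamma> (coordinates indexed by ovals).
  c (A|B)^T = 0 over F_2 means: for every point P, the number of support lines through P
  plus the number of support ovals containing P is even.\<close>
definition in_code :: "('a::{finite,field} ^ 3) set set set \<Rightarrow> ('a ^ 3) set set
                        \<Rightarrow> ('a ^ 3) set set set \<Rightarrow> bool" where
  "in_code \<Gamma> Ls Os \<longleftrightarrow> Ls \<subseteq> pg_lines \<and> Os \<subseteq> \<Gamma>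
     \<and> (\<forall>P \<in> pg_points. even (card {L \<in> Ls. P \<subseteq> L} + card {X \<in> Os. P \<in> X}))"

definition weight :: "('a ^ 3) set set \<Rightarrow> ('a ^ 3) set set set \<Rightarrow> nat" where
  "weight Ls Os = card Ls + card Os"

definition tangent :: "('a::field ^ 3) set \<Rightarrow> ('a ^ 3) set set \<Rightarrow> bool" where
  "tangent L X \<longleftrightarrow> meet X L = 1"

definition dual_hyperoval :: "('a::{finite,field} ^ 3) set set \<Rightarrow> bool" where
  "dual_hyperoval Ls \<longleftrightarrow> Ls \<subseteq> pg_lines \<and> card Ls = CARD('a) + 2
     \<and> (\<forall>P \<in> pg_points. card {L \<in> Ls. P \<subseteq> L} = 0 \<or> card {L \<in> Ls. P \<subseteq> L} = 2)"

definition hyperoval_of_ovals :: "('a::{finite,field} ^ 3) set set set \<Rightarrow> ('a ^ 3) set set set \<Rightarrow> bool" where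
  "hyperoval_of_ovals \<Gamma> Os \<longleftrightarrow> Os \<subseteq> \<Gamma> \<and> card Os = CARD('a) + 2
     \<and> (\<forall>P \<in> pg_points. card {X \<in> Os. P \<in> X} = 0 \<or> card {X \<in> Os. P \<in> X} = 2)"

end

theory Submission
  imports Defs "HOL-Analysis.Cartesian_Space"
begin

lemma dc2:
  assumes "finite A" "finite F"
  shows "(\<Sum>b\<in>F. card {a\<in>A. R a b}) = (\<Sum>a\<in>A. card {b\<in>F. R a b})"
proof -
  have "(\<Sum>b\<in>F. card {a\<in>A. R a b}) = (\<Sum>b\<in>F. \<Sum>a\<in>A. if R a b then 1 else 0)"
    using assms by (simp add: sum.If_cases Int_def conj_commute)
  also have "\<dots> = (\<Sum>a\<in>A. \<Sum>b\<in>F. if R a b then 1 else 0)"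
    by (rule sum.swap)
  also have "\<dots> = (\<Sum>a\<in>A. card {b\<in>F. R a b})"
    using assms by (simp add: sum.If_cases Int_def conj_commute)
  finally show ?thesis .
qed

lemma dc:
  assumes "finite A" "finite F"
  shows "(\<Sum>b\<in>F. card (b \<inter> A)) = (\<Sum>a\<in>A. card {b\<in>F. a \<in> b})"
proof -
  have "\<And>b. b \<inter> A = {a\<in>A. a \<in> b}" by auto
  then show ?thesis using dc2[OF assms, of "\<lambda>a b. a \<in> b"] by simp
qed

lemma parity2:
  assumes "finite F" "\<forall>b\<in>F. f b \<le> (2::nat)"
  shows "even (sum f F) \<longleftrightarrow> even (card {b\<in>F. f b = 1})"
proof -
  have "{b\<in>F. odd (f b)} = {b\<in>F. f b = 1}"
  proof (intro Collect_cong conj_cong refl)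
    fix b assume "b \<in> F"
    then have "f b \<le> 2" using assms by auto
    then show "odd (f b) \<longleftrightarrow> f b = 1"
      by (cases "f b"; cases "f b - 1"; auto)
  qed
  then show ?thesis using even_sum_iff[OF assms(1), of f] by simp
qed

lemma sum_eq_const_ge:
  fixes f :: "'a \<Rightarrow> nat"
  assumes "finite A" "\<forall>x\<in>A. f x \<ge> c" "sum f A \<le> c * card A"
  shows "\<forall>x\<in>A. f x = c"
proof (rule ccontr)
  assume "\<not> (\<forall>x\<in>A. f x = c)"
  then obtain x where "x \<in> A" "f x \<noteq> c" by auto
  then have "f x > c" using assms(2) by force
  then have "sum (\<lambda>_. c) A < sum f A"
    using assms(1,2) \<open>x\<in>A\<close> by (intro sum_strict_mono_ex1) auto
  then show False using assms(3) by (simp add: mult.commute)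
qed

lemma sum_eq_const_le:
  fixes f :: "'a \<Rightarrow> nat"
  assumes "finite A" "\<forall>x\<in>A. f x \<le> c" "sum f A \<ge> c * card A"
  shows "\<forall>x\<in>A. f x = c"
proof (rule ccontr)
  assume "\<not> (\<forall>x\<in>A. f x = c)"
  then obtain x where "x \<in> A" "f x \<noteq> c" by auto
  then have "f x < c" using assms(2) by force
  then have "sum f A < sum (\<lambda>_. c) A"
    using assms(1,2) \<open>x\<in>A\<close> by (intro sum_strict_mono_ex1) auto
  then show False using assms(3) by (simp add: mult.commute)
qed


locale plane =
  fixes Pts :: "'p set" and Bl :: "'p set set" and q :: nat
  assumes finP: "finite Pts"
  and cardP: "card Pts = q*q+q+1"
  and blk_sub: "b \<in> Bl \<Longrightarrow> b \<subseteq> Pts"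
  and blk_card: "b \<in> Bl \<Longrightarrow> card b = q+1"
  and two_pts: "P \<in> Pts \<Longrightarrow> Q \<in> Pts \<Longrightarrow> P \<noteq> Q \<Longrightarrow> card {b\<in>Bl. P \<in> b \<and> Q \<in> b} = 1"
  and two_blk: "b \<in> Bl \<Longrightarrow> c \<in> Bl \<Longrightarrow> b \<noteq> c \<Longrightarrow> card (b \<inter> c) = 1"
  and cardB: "card Bl = q*q+q+1"
  and deg: "P \<in> Pts \<Longrightarrow> card {b\<in>Bl. P \<in> b} = q+1"
  and q2: "q \<ge> 2"
begin

lemma finB: "finite Bl"
  using cardB card.infinite by (metis add_is_0 one_neq_zero)

lemma fin_blk: "b \<in> Bl \<Longrightarrow> finite b"
  using blk_sub finP by (rule finite_subset)

lemma unique_blk: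
  assumes "P \<in> Pts" "Q \<in> Pts" "P \<noteq> Q"
  shows "\<exists>!b. b \<in> Bl \<and> P \<in> b \<and> Q \<in> b"
proof -
  from two_pts[OF assms] obtain b where b: "{b\<in>Bl. P \<in> b \<and> Q \<in> b} = {b}"
    by (rule card_1_singletonE)
  show ?thesis
  proof
    show "b \<in> Bl \<and> P \<in> b \<and> Q \<in> b" using b by blast
  next
    fix c assume "c \<in> Bl \<and> P \<in> c \<and> Q \<in> c"
    then have "c \<in> {b\<in>Bl. P \<in> b \<and> Q \<in> b}" by simp
    then show "c = b" using b by simp
  qed
qed
end

context plane
begin
lemma sum_blocks_in:
  assumes "Ls \<subseteq> Bl" "M \<in> Bl"
  shows "(\<Sum>L\<in>Ls. card (L \<inter> M)) = card Ls + (if M \<in> Ls then q else 0)"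
proof -
  have fin: "finite Ls" using assms finB finite_subset by blast
  have one: "\<And>L. L \<in> Ls - {M} \<Longrightarrow> card (L \<inter> M) = 1"
    using assms two_blk by blast
  show ?thesis
  proof (cases "M \<in> Ls")
    case True
    have "(\<Sum>L\<in>Ls. card (L \<inter> M)) = card (M \<inter> M) + (\<Sum>L\<in>Ls-{M}. card (L \<inter> M))"
      using fin True by (simp add: sum.remove)
    also have "\<dots> = (q+1) + card (Ls - {M})"
      using one assms blk_card by simp
    also have "\<dots> = card Ls + q" using True fin
      by (simp add: card_Diff_singleton) (metis One_nat_def Suc_pred card_gt_0_iff empty_iff)
    finally show ?thesis using True by simp
  next
    case False
    then have "(\<Sum>L\<in>Ls. card (L \<inter> M)) = (\<Sum>L\<in>Ls. 1)"
      using one by (intro sum.cong) auto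
    then show ?thesis using False by simp
  qed
qed

context
  fixes K assumes Ksub: "K \<subseteq> Pts" and Kcard: "card K = q+1"
    and Karc: "\<forall>b\<in>Bl. card (b \<inter> K) \<le> 2"
begin

lemma finK: "finite K" using Ksub finP finite_subset by blast

lemma tan_at:
  assumes PK: "P \<in> K"
  shows "card {b\<in>Bl. P \<in> b \<and> card (b \<inter> K) = 1} = 1"
proof -
  have PP: "P \<in> Pts" using PK Ksub by auto
  define S where "S = {b\<in>Bl. P \<in> b}"
  define U where "U = {b\<in>S. card (b \<inter> K) \<noteq> 1}"
  define T where "T = {b\<in>Bl. P \<in> b \<and> card (b \<inter> K) = 1}"
  have finS: "finite S" using finB S_def by auto
  have ST: "S = T \<union> U" "T \<inter> U = {}" unfolding S_def T_def U_def by auto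
  define \<phi> where "\<phi> Q = (THE b. b \<in> Bl \<and> P \<in> b \<and> Q \<in> b)" for Q
  have phi: "\<phi> Q \<in> Bl \<and> P \<in> \<phi> Q \<and> Q \<in> \<phi> Q" if "Q \<in> K - {P}" for Q
  proof -
    have QP: "Q \<in> Pts" "P \<noteq> Q" using that Ksub by auto
    have "\<exists>!b. b \<in> Bl \<and> P \<in> b \<and> Q \<in> b" using unique_blk[OF PP QP] .
    then show ?thesis unfolding \<phi>_def by (rule theI')
  qed
  have phi_eq: "\<phi> Q = b" if "Q \<in> K - {P}" "b \<in> Bl" "P \<in> b" "Q \<in> b" for Q b
  proof -
    have QP: "Q \<in> Pts" "P \<noteq> Q" using that Ksub by auto
    have "\<exists>!b. b \<in> Bl \<and> P \<in> b \<and> Q \<in> b" using unique_blk[OF PP QP] .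
    then show ?thesis using phi[OF that(1)] that by blast
  qed
  have two_le: "2 \<le> card (b \<inter> K)" if "b \<in> Bl" "P \<in> b" "Q \<in> b" "Q \<in> K" "Q \<noteq> P" for b Q
  proof -
    have "{P, Q} \<subseteq> b \<inter> K" using that PK by auto
    then have "card {P,Q} \<le> card (b \<inter> K)" using finK by (intro card_mono) auto
    then show ?thesis using that by simp
  qed
  have inj: "inj_on \<phi> (K - {P})"
  proof (rule inj_onI)
    fix Q Q' assume a: "Q \<in> K - {P}" "Q' \<in> K - {P}" "\<phi> Q = \<phi> Q'"
    show "Q = Q'"
    proof (rule ccontr)
      assume "Q \<noteq> Q'"
      then have "{P, Q, Q'} \<subseteq> \<phi> Q \<inter> K" using phi[OF a(1)] phi[OF a(2)] a PK by auto
      then have "card {P,Q,Q'} \<le> card (\<phi> Q \<inter> K)" using finK by (intro card_mono) auto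
      moreover have "card {P,Q,Q'} = 3" using a \<open>Q \<noteq> Q'\<close> by auto
      moreover have "card (\<phi> Q \<inter> K) \<le> 2" using Karc phi[OF a(1)] by auto
      ultimately show False by simp
    qed
  qed
  have img: "\<phi> ` (K - {P}) = U"
  proof
    show "\<phi> ` (K - {P}) \<subseteq> U"
    proof
      fix b assume "b \<in> \<phi> ` (K - {P})"
      then obtain Q where Q: "Q \<in> K - {P}" "b = \<phi> Q" by auto
      then show "b \<in> U" using phi[OF Q(1)] two_le[of b Q] unfolding U_def S_def by auto
    qed
  next
    show "U \<subseteq> \<phi> ` (K - {P})"
    proof
      fix b assume bU: "b \<in> U"
      then have b: "b \<in> Bl" "P \<in> b" "card (b \<inter> K) \<noteq> 1" unfolding U_def S_def by auto
      have "P \<in> b \<inter> K" using b PK by auto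
      then have "b \<inter> K \<noteq> {P}" using b(3) by auto
      then obtain Q where "Q \<in> b \<inter> K" "Q \<noteq> P" using \<open>P \<in> b \<inter> K\<close> by blast
      then have "\<phi> Q = b" using phi_eq b by auto
      then show "b \<in> \<phi> ` (K - {P})" using \<open>Q \<in> b \<inter> K\<close> \<open>Q \<noteq> P\<close> by auto
    qed
  qed
  have "card U = q" using card_image[OF inj] img Kcard PK finK by (simp add: card_Diff_singleton)
  moreover have "card S = q + 1" using deg PP S_def by simp
  moreover have "card S = card T + card U" using ST finS card_Un_disjoint
    by (metis finite_Un)
  ultimately have "card T = 1" by simp
  then show ?thesis unfolding T_def .
qed

lemma tan_card: "card {b\<in>Bl. card (b \<inter> K) = 1} = q+1"
proof -
  define T where "T = {b\<in>Bl. card (b \<inter> K) = 1}"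
  have finT: "finite T" using finB T_def by auto
  have "(\<Sum>b\<in>T. card (b \<inter> K)) = (\<Sum>a\<in>K. card {b\<in>T. a \<in> b})"
    by (rule dc[OF finK finT])
  also have "\<dots> = (\<Sum>a\<in>K. 1)"
  proof (rule sum.cong[OF refl])
    fix a assume "a \<in> K"
    have "{b\<in>T. a \<in> b} = {b\<in>Bl. a \<in> b \<and> card (b \<inter> K) = 1}" unfolding T_def by auto
    then show "card {b\<in>T. a \<in> b} = 1" using tan_at[OF \<open>a \<in> K\<close>] by simp
  qed
  finally have "(\<Sum>b\<in>T. card (b \<inter> K)) = q+1" using Kcard by simp
  moreover have "(\<Sum>b\<in>T. card (b \<inter> K)) = card T" unfolding T_def by simp
  ultimately show ?thesis unfolding T_def by simp
qed

lemma sum_through_off: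
  assumes "P \<in> Pts" "P \<notin> K"
  shows "(\<Sum>b\<in>{b\<in>Bl. P \<in> b}. card (b \<inter> K)) = q+1"
proof -
  have "(\<Sum>b\<in>{b\<in>Bl. P \<in> b}. card (b \<inter> K)) = (\<Sum>a\<in>K. card {b\<in>{b\<in>Bl. P \<in> b}. a \<in> b})"
    using finB by (intro dc finK) auto
  also have "\<dots> = (\<Sum>a\<in>K. 1)"
  proof (rule sum.cong[OF refl])
    fix a assume "a \<in> K"
    then have "card {b\<in>Bl. P \<in> b \<and> a \<in> b} = 1" using two_pts assms Ksub by blast
    moreover have "{b\<in>{b\<in>Bl. P \<in> b}. a \<in> b} = {b\<in>Bl. P \<in> b \<and> a \<in> b}" by auto
    ultimately show "card {b\<in>{b\<in>Bl. P \<in> b}. a \<in> b} = 1" by simp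
  qed
  finally show ?thesis using Kcard by simp
qed

lemma tan_off_parity:
  assumes "P \<in> Pts" "P \<notin> K"
  shows "even (card {b\<in>Bl. P \<in> b \<and> card (b \<inter> K) = 1} + q + 1)"
proof -
  have "even (\<Sum>b\<in>{b\<in>Bl. P \<in> b}. card (b \<inter> K)) \<longleftrightarrow> even (card {b\<in>{b\<in>Bl. P \<in> b}. card (b \<inter> K) = 1})"
    using finB Karc by (intro parity2) auto
  moreover have "{b\<in>{b\<in>Bl. P \<in> b}. card (b \<inter> K) = 1} = {b\<in>Bl. P \<in> b \<and> card (b \<inter> K) = 1}" by auto
  ultimately show ?thesis using sum_through_off[OF assms] by auto
qed

end

end


context plane
begin

lemma card_Bl_gt: "card Bl > q + 2"
proof -
  have "q*q \<ge> 2*2" using q2 by (intro mult_mono) auto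
  then show ?thesis using cardB by simp
qed

lemma pure:
  assumes Ls: "Ls \<subseteq> Bl" "Ls \<noteq> {}"
    and ev: "\<forall>P\<in>Pts. even (card {L\<in>Ls. P \<in> L})"
    and wt: "card Ls \<le> q + 2"
  shows "card Ls = q + 2 \<and> (\<forall>P\<in>Pts. card {L\<in>Ls. P \<in> L} = 0 \<or> card {L\<in>Ls. P \<in> L} = 2) \<and> even q"
proof -
  have finLs: "finite Ls" using Ls finB finite_subset by blast
  have key: "(\<Sum>P\<in>L. card {L'\<in>Ls. P \<in> L'}) = card Ls + q" if "L \<in> Ls" for L
  proof -
    have "(\<Sum>P\<in>L. card {L'\<in>Ls. P \<in> L'}) = (\<Sum>L'\<in>Ls. card (L' \<inter> L))"
      using dc[OF fin_blk finLs, of L] that Ls by auto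
    also have "\<dots> = card Ls + q" using sum_blocks_in[OF Ls(1), of L] that Ls by auto
    finally show ?thesis .
  qed
  have ge2: "card {L'\<in>Ls. P \<in> L'} \<ge> 2" if "L \<in> Ls" "P \<in> L" for L P
  proof -
    have "L \<in> {L'\<in>Ls. P \<in> L'}" using that by auto
    then have "card {L'\<in>Ls. P \<in> L'} \<noteq> 0" using finLs by auto
    moreover have "even (card {L'\<in>Ls. P \<in> L'})" using ev that Ls blk_sub by blast
    ultimately show ?thesis by presburger
  qed
  obtain L0 where L0: "L0 \<in> Ls" using Ls by auto
  have "2 * card L0 \<le> (\<Sum>P\<in>L0. card {L'\<in>Ls. P \<in> L'})"
    using sum_mono[of L0 "\<lambda>_. 2" "\<lambda>P. card {L'\<in>Ls. P \<in> L'}"] ge2[OF L0] by simp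
  then have "2 * (q+1) \<le> card Ls + q" using key[OF L0] blk_card L0 Ls by auto
  then have cLs: "card Ls = q + 2" using wt by simp
  have all2: "card {L'\<in>Ls. P \<in> L'} = 2" if "L \<in> Ls" "P \<in> L" for L P
  proof -
    have "\<forall>P\<in>L. card {L'\<in>Ls. P \<in> L'} = 2"
    proof (rule sum_eq_const_ge)
      show "finite L" using that Ls fin_blk by auto
      show "\<forall>x\<in>L. 2 \<le> card {L' \<in> Ls. x \<in> L'}" using ge2 that by auto
      show "(\<Sum>P\<in>L. card {L'\<in>Ls. P \<in> L'}) \<le> 2 * card L"
        using key[OF that(1)] cLs blk_card that Ls by auto
    qed
    then show ?thesis using that by auto
  qed
  have part2: "\<forall>P\<in>Pts. card {L\<in>Ls. P \<in> L} = 0 \<or> card {L\<in>Ls. P \<in> L} = 2"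
  proof
    fix P assume "P \<in> Pts"
    show "card {L\<in>Ls. P \<in> L} = 0 \<or> card {L\<in>Ls. P \<in> L} = 2"
    proof (cases "\<exists>L\<in>Ls. P \<in> L")
      case True
      then obtain L where "L \<in> Ls" "P \<in> L" by blast
      then show ?thesis using all2 by blast
    next
      case False
      have "{L\<in>Ls. P \<in> L} = {}" using False by blast
      then have "card {L\<in>Ls. P \<in> L} = 0" by (simp only: card.empty)
      then show ?thesis by (rule disjI1)
    qed
  qed
  have "\<not> Bl \<subseteq> Ls"
  proof
    assume "Bl \<subseteq> Ls"
    then have "card Bl \<le> card Ls" by (rule card_mono[OF finLs])
    then show False using card_Bl_gt cLs by simp
  qed
  then obtain M where M: "M \<in> Bl" "M \<notin> Ls" by auto
  have "(\<Sum>P\<in>M. card {L'\<in>Ls. P \<in> L'}) = (\<Sum>L'\<in>Ls. card (L' \<inter> M))"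
    using dc[OF fin_blk finLs, of M] M by auto
  also have "\<dots> = card Ls" using sum_blocks_in[OF Ls(1) M(1)] M by auto
  finally have s: "(\<Sum>P\<in>M. card {L'\<in>Ls. P \<in> L'}) = q + 2" using cLs by simp
  have "even (\<Sum>P\<in>M. card {L'\<in>Ls. P \<in> L'})"
    using ev blk_sub[OF M(1)] by (intro dvd_sum) auto
  then have "even q" using s by simp
  then show ?thesis using cLs part2 by auto
qed

end

context plane
begin

lemma qvist:
  assumes Ksub: "K \<subseteq> Pts" and Kcard: "card K = q+1"
    and Karc: "\<forall>b\<in>Bl. card (b \<inter> K) \<le> 2" and evq: "even q"
  shows "\<exists>N\<in>Pts. N \<notin> K \<and> (\<forall>b\<in>Bl. N \<in> b \<longleftrightarrow> card (b \<inter> K) = 1)"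
proof -
  have finK: "finite K" using Ksub finP finite_subset by blast
  define T where "T = {b\<in>Bl. card (b \<inter> K) = 1}"
  have cT: "card T = q+1" unfolding T_def using tan_card[OF Ksub Kcard Karc] .
  have finT: "finite T" unfolding T_def using finB by simp
  define t where "t R = card {b\<in>T. R \<in> b}" for R
  have tset: "{b\<in>T. R \<in> b} = {b\<in>Bl. R \<in> b \<and> card (b \<inter> K) = 1}" for R
    unfolding T_def by auto
  have todd: "odd (t R)" if "R \<in> Pts" "R \<notin> K" for R
  proof -
    have "even (t R + q + 1)" unfolding t_def tset using tan_off_parity[OF Ksub Kcard Karc that] .
    then show ?thesis using evq by simp
  qed
  have sec: "t R = 1" if R: "R \<in> Pts" "R \<notin> K" and s: "s \<in> Bl" "R \<in> s" "card (s \<inter> K) = 2" for R s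
  proof -
    obtain P1 P2 where P12: "s \<inter> K = {P1, P2}" "P1 \<noteq> P2" using s(3) by (meson card_2_iff)
    have P1K: "P1 \<in> K" "P2 \<in> K" "P1 \<in> s" "P2 \<in> s" using P12 by auto
    obtain \<tau>1 where t1: "{b\<in>Bl. P1 \<in> b \<and> card (b \<inter> K) = 1} = {\<tau>1}"
      using tan_at[OF Ksub Kcard Karc P1K(1)] by (rule card_1_singletonE)
    obtain \<tau>2 where t2: "{b\<in>Bl. P2 \<in> b \<and> card (b \<inter> K) = 1} = {\<tau>2}"
      using tan_at[OF Ksub Kcard Karc P1K(2)] by (rule card_1_singletonE)
    have t1p: "\<tau>1 \<in> Bl" "P1 \<in> \<tau>1" "card (\<tau>1 \<inter> K) = 1" using t1 by blast+
    have t2p: "\<tau>2 \<in> Bl" "P2 \<in> \<tau>2" "card (\<tau>2 \<inter> K) = 1" using t2 by blast+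
    have "\<tau>1 \<noteq> \<tau>2"
    proof
      assume "\<tau>1 = \<tau>2"
      then have "{P1, P2} \<subseteq> \<tau>1 \<inter> K" using t1p t2p P1K by auto
      then have "card {P1,P2} \<le> card (\<tau>1 \<inter> K)" using finK by (intro card_mono) auto
      then show False using t1p P12 by simp
    qed
    define A where "A = s - K"
    have finA: "finite A" unfolding A_def using fin_blk[OF s(1)] by simp
    have cA: "card A = q - 1"
    proof -
      have "card (s - K) = card s - card (s \<inter> K)" by (rule card_Diff_subset_Int) (simp add: finK)
      then show ?thesis unfolding A_def using blk_card[OF s(1)] s(3) by simp
    qed
    have RA: "R \<in> A" unfolding A_def using R s by auto
    have bnd: "card (b \<inter> A) \<le> (if b \<in> {\<tau>1, \<tau>2} then 0 else 1)" if bT: "b \<in> T" for b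
    proof -
      have bB: "b \<in> Bl" "card (b \<inter> K) = 1" using bT unfolding T_def by auto
      have "b \<noteq> s" using bB s(3) by auto
      then have c1: "card (b \<inter> s) = 1" using two_blk bB s by auto
      have fbs: "finite (b \<inter> s)" using fin_blk[OF s(1)] by simp
      have le1: "card (b \<inter> A) \<le> 1"
        using card_mono[OF fbs, of "b \<inter> A"] c1 unfolding A_def by auto
      show ?thesis
      proof (cases "b \<in> {\<tau>1, \<tau>2}")
        case True
        then obtain P where P: "P \<in> K" "P \<in> b" "P \<in> s" using P1K t1p t2p by auto
        obtain Z where "b \<inter> s = {Z}" using c1 by (rule card_1_singletonE)
        then have "b \<inter> s = {P}" using P by auto
        then have "b \<inter> A = {}" unfolding A_def using P by auto
        then show ?thesis using True by simp
      next
        case False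
        then show ?thesis using le1 by simp
      qed
    qed
    have "(\<Sum>R'\<in>A. t R') = (\<Sum>b\<in>T. card (b \<inter> A))"
      unfolding t_def using dc[OF finA finT] by simp
    also have "\<dots> \<le> (\<Sum>b\<in>T. (if b \<in> {\<tau>1, \<tau>2} then 0 else 1))"
      using bnd by (intro sum_mono) auto
    also have "\<dots> = card (T - {\<tau>1, \<tau>2})"
    proof -
      have "{b. b = \<tau>1 \<or> b = \<tau>2} = {\<tau>1, \<tau>2}" by auto
      then show ?thesis using finT by (simp add: sum.If_cases Diff_eq)
    qed
    also have "\<dots> = q - 1"
    proof -
      have "{\<tau>1, \<tau>2} \<subseteq> T" unfolding T_def using t1p t2p by auto
      then have "card (T - {\<tau>1, \<tau>2}) = card T - card {\<tau>1, \<tau>2}"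
        using finT by (intro card_Diff_subset) auto
      then show ?thesis using cT \<open>\<tau>1 \<noteq> \<tau>2\<close> by simp
    qed
    finally have le: "(\<Sum>R'\<in>A. t R') \<le> 1 * card A" using cA by simp
    have ge: "\<forall>x\<in>A. 1 \<le> t x"
    proof
      fix x assume "x \<in> A"
      then have "x \<in> Pts" "x \<notin> K" unfolding A_def using blk_sub[OF s(1)] by auto
      then have "odd (t x)" by (rule todd)
      then show "1 \<le> t x" by (cases "t x") auto
    qed
    show ?thesis using sum_eq_const_ge[OF finA ge le] RA by blast
  qed
  have "\<exists>N\<in>Pts. N \<notin> K \<and> (\<forall>s\<in>Bl. N \<in> s \<longrightarrow> card (s \<inter> K) \<noteq> 2)"
  proof (rule ccontr)
    assume "\<not> ?thesis"
    then have all1: "\<forall>R\<in>Pts - K. t R = 1" using sec by blast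
    have finPK: "finite (Pts - K)" using finP by simp
    have "(\<Sum>R\<in>Pts - K. t R) = (\<Sum>R\<in>Pts - K. 1)" using all1 by (intro sum.cong) auto
    also have "\<dots> = card (Pts - K)" by simp
    also have "\<dots> = q * q" using card_Diff_subset[OF finK Ksub] cardP Kcard by simp
    finally have s1: "(\<Sum>R\<in>Pts - K. t R) = q * q" .
    have "(\<Sum>R\<in>Pts - K. t R) = (\<Sum>b\<in>T. card (b \<inter> (Pts - K)))"
      unfolding t_def using dc[OF finPK finT] by simp
    also have "\<dots> = (\<Sum>b\<in>T. q)"
    proof (rule sum.cong[OF refl])
      fix b assume "b \<in> T"
      then have bB: "b \<in> Bl" "card (b \<inter> K) = 1" unfolding T_def by auto
      have "b \<inter> (Pts - K) = b - K" using blk_sub[OF bB(1)] by auto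
      moreover have "card (b - K) = card b - card (b \<inter> K)"
        by (rule card_Diff_subset_Int) (simp add: finK)
      ultimately show "card (b \<inter> (Pts - K)) = q" using bB blk_card by simp
    qed
    also have "\<dots> = (q+1) * q" using cT by simp
    finally have "q * q = (q+1) * q" using s1 by simp
    then show False using q2 by simp
  qed
  then obtain N where N: "N \<in> Pts" "N \<notin> K" "\<forall>s\<in>Bl. N \<in> s \<longrightarrow> card (s \<inter> K) \<noteq> 2" by blast
  define S where "S = {b\<in>Bl. N \<in> b}"
  have finS: "finite S" unfolding S_def using finB by simp
  have cS: "card S = q+1" unfolding S_def using deg[OF N(1)] .
  have le1: "\<forall>b\<in>S. card (b \<inter> K) \<le> 1" using N(3) Karc unfolding S_def by fastforce
  have "(\<Sum>b\<in>S. card (b \<inter> K)) = q+1" unfolding S_def using sum_through_off[OF Ksub Kcard Karc N(1,2)] .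
  then have "\<forall>b\<in>S. card (b \<inter> K) = 1" using sum_eq_const_le[OF finS le1] cS by simp
  then have ST: "S \<subseteq> T" unfolding S_def T_def by auto
  then have "S = T" using card_subset_eq[OF finT ST] cS cT by simp
  then have "\<forall>b\<in>Bl. N \<in> b \<longleftrightarrow> card (b \<inter> K) = 1" unfolding S_def T_def by blast
  then show ?thesis using N by blast
qed

lemma hyperoval:
  assumes Ksub: "K \<subseteq> Pts" and Kcard: "card K = q+1"
    and Karc: "\<forall>b\<in>Bl. card (b \<inter> K) \<le> 2" and evq: "even q"
  shows "\<exists>H. H \<subseteq> Pts \<and> card H = q + 2 \<and> (\<forall>b\<in>Bl. card (b \<inter> H) = 0 \<or> card (b \<inter> H) = 2)"
proof -
  obtain N where N: "N \<in> Pts" "N \<notin> K" "\<forall>b\<in>Bl. N \<in> b \<longleftrightarrow> card (b \<inter> K) = 1"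
    using qvist[OF assms] by blast
  have finK: "finite K" using Ksub finP finite_subset by blast
  have "\<forall>b\<in>Bl. card (b \<inter> insert N K) = 0 \<or> card (b \<inter> insert N K) = 2"
  proof
    fix b assume b: "b \<in> Bl"
    show "card (b \<inter> insert N K) = 0 \<or> card (b \<inter> insert N K) = 2"
    proof (cases "N \<in> b")
      case True
      then have "b \<inter> insert N K = insert N (b \<inter> K)" by auto
      moreover have "card (b \<inter> K) = 1" using N b True by auto
      ultimately show ?thesis using N(2) finK by simp
    next
      case False
      then have "b \<inter> insert N K = b \<inter> K" by auto
      moreover have "card (b \<inter> K) \<noteq> 1" using N b False by auto
      moreover have "card (b \<inter> K) \<le> 2" using Karc b by auto
      ultimately show ?thesis by auto
    qed
  qed
  moreover have "card (insert N K) = q + 2" using N(2) finK Kcard by simp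
  moreover have "insert N K \<subseteq> Pts" using N Ksub by auto
  ultimately show ?thesis by blast
qed

end

definition cwd :: "'p set \<Rightarrow> 'p set set \<Rightarrow> 'p set set \<Rightarrow> 'p set set \<Rightarrow> 'p set set \<Rightarrow> bool" where
  "cwd Pts B1 B2 Ls Os \<longleftrightarrow> Ls \<subseteq> B1 \<and> Os \<subseteq> B2 \<and>
     (\<forall>P\<in>Pts. even (card {L\<in>Ls. P \<in> L} + card {X\<in>Os. P \<in> X}))"

lemma cwd_swap: "cwd Pts B1 B2 Ls Os \<Longrightarrow> cwd Pts B2 B1 Os Ls"
  unfolding cwd_def by (simp add: add.commute)

locale twoplanes = p1: plane Pts B1 q + p2: plane Pts B2 q for Pts B1 B2 q +
  assumes cross: "b \<in> B1 \<Longrightarrow> c \<in> B2 \<Longrightarrow> card (b \<inter> c) \<le> 2"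

lemma twoplanes_swap: "twoplanes Pts B1 B2 q \<Longrightarrow> twoplanes Pts B2 B1 q"
  unfolding twoplanes_def twoplanes_axioms_def by (metis Int_commute)

context twoplanes
begin

lemma cross': "c \<in> B2 \<Longrightarrow> b \<in> B1 \<Longrightarrow> card (c \<inter> b) \<le> 2"
  using cross[of b c] by (metis Int_commute)

lemma arcX: "X \<in> B2 \<Longrightarrow> X \<subseteq> Pts \<and> card X = q+1 \<and> (\<forall>b\<in>B1. card (b \<inter> X) \<le> 2)"
  using p2.blk_sub p2.blk_card cross by blast

lemma arcL: "L \<in> B1 \<Longrightarrow> L \<subseteq> Pts \<and> card L = q+1 \<and> (\<forall>c\<in>B2. card (c \<inter> L) \<le> 2)"
  using p1.blk_sub p1.blk_card cross' by blast

lemma linepar: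
  assumes cw: "cwd Pts B1 B2 Ls Os" and M: "M \<in> B1"
  shows "even (card Ls + (if M \<in> Ls then q else 0) + card {X\<in>Os. card (X \<inter> M) = 1})"
proof -
  have Ls: "Ls \<subseteq> B1" and Os: "Os \<subseteq> B2"
    and ev: "\<forall>P\<in>Pts. even (card {L\<in>Ls. P \<in> L} + card {X\<in>Os. P \<in> X})"
    using cw unfolding cwd_def by auto
  have finLs: "finite Ls" using Ls p1.finB finite_subset by blast
  have finOs: "finite Os" using Os p2.finB finite_subset by blast
  have finM: "finite M" using p1.fin_blk[OF M] .
  have "even (\<Sum>P\<in>M. card {L\<in>Ls. P \<in> L} + card {X\<in>Os. P \<in> X})"
    using ev p1.blk_sub[OF M] by (intro dvd_sum) auto
  then have e1: "even ((\<Sum>P\<in>M. card {L\<in>Ls. P \<in> L}) + (\<Sum>P\<in>M. card {X\<in>Os. P \<in> X}))"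
    by (simp add: sum.distrib)
  have s1: "(\<Sum>P\<in>M. card {L\<in>Ls. P \<in> L}) = card Ls + (if M \<in> Ls then q else 0)"
    using dc[OF finM finLs] p1.sum_blocks_in[OF Ls M] by simp
  have s2: "(\<Sum>P\<in>M. card {X\<in>Os. P \<in> X}) = (\<Sum>X\<in>Os. card (X \<inter> M))"
    using dc[OF finM finOs] by simp
  have p: "even (\<Sum>X\<in>Os. card (X \<inter> M)) \<longleftrightarrow> even (card {X\<in>Os. card (X \<inter> M) = 1})"
  proof (rule parity2[OF finOs])
    show "\<forall>b\<in>Os. card (b \<inter> M) \<le> 2" using cross' M Os by blast
  qed
  show ?thesis using e1 s1 s2 p by simp
qed

lemma lemmaT:
  assumes L1: "L1 \<in> B1" and L2: "L2 \<in> B1" and ne: "L1 \<noteq> L2"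
  shows "card ({Y\<in>B2. card (Y \<inter> L1) = 1} \<inter> {Y\<in>B2. card (Y \<inter> L2) = 1}) = 1"
proof -
  define D where "D L = {Y\<in>B2. card (Y \<inter> L) = 1}" for L
  have finD: "finite (D L)" for L unfolding D_def using p2.finB by simp
  have cD: "card (D L) = q+1" if "L \<in> B1" for L
    unfolding D_def using arcL[OF that] p2.tan_card by blast
  have oddc: "odd (card (D L1 \<inter> D L))" if L: "L \<in> B1" "L \<noteq> L1" for L
  proof -
    have aL: "L \<subseteq> Pts" "card L = q+1" "\<forall>c\<in>B2. card (c \<inter> L) \<le> 2" using arcL[OF L(1)] by auto
    have finL1: "finite L1" using p1.fin_blk[OF L1] .
    have eqc: "D L1 \<inter> D L = {Y\<in>D L. card (Y \<inter> L1) = 1}" unfolding D_def by auto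
    have par: "even (\<Sum>Y\<in>D L. card (Y \<inter> L1)) \<longleftrightarrow> even (card {Y\<in>D L. card (Y \<inter> L1) = 1})"
    proof (rule parity2[OF finD])
      show "\<forall>b\<in>D L. card (b \<inter> L1) \<le> 2" unfolding D_def using arcL[OF L1] by auto
    qed
    define g where "g P = card {b\<in>B2. P \<in> b \<and> card (b \<inter> L) = 1}" for P
    have gset: "{Y\<in>D L. P \<in> Y} = {b\<in>B2. P \<in> b \<and> card (b \<inter> L) = 1}" for P
      unfolding D_def by auto
    have "(\<Sum>Y\<in>D L. card (Y \<inter> L1)) = (\<Sum>P\<in>L1. card {Y\<in>D L. P \<in> Y})"
      using dc[OF finL1 finD] by simp
    also have "\<dots> = (\<Sum>P\<in>L1. g P)" unfolding g_def gset ..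
    finally have sg: "(\<Sum>Y\<in>D L. card (Y \<inter> L1)) = (\<Sum>P\<in>L1. g P)" .
    have "card (L1 \<inter> L) = 1" using p1.two_blk L1 L by auto
    then obtain P0 where P0: "L1 \<inter> L = {P0}" by (rule card_1_singletonE)
    have P0L1: "P0 \<in> L1" and P0L: "P0 \<in> L" using P0 by auto
    have gP0: "g P0 = 1" unfolding g_def using p2.tan_at[OF aL P0L] .
    have offP: "even (g P + q + 1)" if "P \<in> L1 - {P0}" for P
    proof -
      have "P \<notin> L" using that P0 by auto
      moreover have "P \<in> Pts" using that p1.blk_sub[OF L1] by auto
      ultimately show ?thesis unfolding g_def using p2.tan_off_parity[OF aL] by blast
    qed
    have "even (\<Sum>P\<in>L1 - {P0}. g P + (q + 1))"
      using offP by (intro dvd_sum) (simp add: add.assoc)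
    moreover have "(\<Sum>P\<in>L1 - {P0}. g P + (q + 1)) = (\<Sum>P\<in>L1 - {P0}. g P) + (\<Sum>P\<in>L1 - {P0}. q + 1)"
      by (rule sum.distrib)
    moreover have "(\<Sum>P\<in>L1 - {P0}. q + 1) = q * (q+1)"
      using P0L1 finL1 p1.blk_card[OF L1] by (simp add: card_Diff_singleton)
    moreover have "even (q * (q+1))" by simp
    ultimately have "even (\<Sum>P\<in>L1 - {P0}. g P)" by simp
    moreover have "(\<Sum>P\<in>L1. g P) = g P0 + (\<Sum>P\<in>L1 - {P0}. g P)"
      using finL1 P0L1 by (simp add: sum.remove)
    ultimately have "odd (\<Sum>P\<in>L1. g P)" using gP0 by simp
    then show ?thesis using par sg eqc by simp
  qed
  define A where "A = B1 - {L1}"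
  have finA: "finite A" unfolding A_def using p1.finB by simp
  have cA: "card A = q*q + q" unfolding A_def using p1.cardB L1 p1.finB by (simp add: card_Diff_singleton)
  have "(\<Sum>L\<in>A. card (D L1 \<inter> D L)) = (\<Sum>L\<in>A. card {Y\<in>D L1. card (Y \<inter> L) = 1})"
  proof (rule sum.cong[OF refl])
    fix L assume "L \<in> A"
    have "D L1 \<inter> D L = {Y\<in>D L1. card (Y \<inter> L) = 1}" unfolding D_def by blast
    then show "card (D L1 \<inter> D L) = card {Y\<in>D L1. card (Y \<inter> L) = 1}" by simp
  qed
  also have "\<dots> = (\<Sum>Y\<in>D L1. card {L\<in>A. card (Y \<inter> L) = 1})"
    by (rule dc2[OF finD finA])
  also have "\<dots> = (\<Sum>Y\<in>D L1. q)"
  proof (rule sum.cong[OF refl])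
    fix Y assume Y: "Y \<in> D L1"
    then have YB: "Y \<in> B2" "card (Y \<inter> L1) = 1" unfolding D_def by auto
    have "{L\<in>A. card (Y \<inter> L) = 1} = {L\<in>B1. card (L \<inter> Y) = 1} - {L1}"
      unfolding A_def by (auto simp: Int_commute)
    moreover have "card {L\<in>B1. card (L \<inter> Y) = 1} = q+1"
      using arcX[OF YB(1)] p1.tan_card by blast
    moreover have "L1 \<in> {L\<in>B1. card (L \<inter> Y) = 1}" using L1 YB by (simp add: Int_commute)
    ultimately show "card {L\<in>A. card (Y \<inter> L) = 1} = q"
      using p1.finB by (simp add: card_Diff_singleton)
  qed
  also have "\<dots> = (q+1) * q" using cD[OF L1] by simp
  finally have le: "(\<Sum>L\<in>A. card (D L1 \<inter> D L)) \<le> 1 * card A" using cA by (simp add: algebra_simps)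
  have ge: "\<forall>L\<in>A. 1 \<le> card (D L1 \<inter> D L)"
  proof
    fix L assume "L \<in> A"
    then have "odd (card (D L1 \<inter> D L))" using oddc unfolding A_def by auto
    then show "1 \<le> card (D L1 \<inter> D L)" by (cases "card (D L1 \<inter> D L)") auto
  qed
  have "\<forall>L\<in>A. card (D L1 \<inter> D L) = 1" by (rule sum_eq_const_ge[OF finA ge le])
  then show ?thesis using L2 ne unfolding A_def D_def by blast
qed

end

lemma card_ne0_ex: "card {x\<in>A. P x} \<noteq> 0 \<Longrightarrow> \<exists>x\<in>A. P x"
proof (rule ccontr)
  assume a: "card {x\<in>A. P x} \<noteq> 0" "\<not> (\<exists>x\<in>A. P x)"
  then have "{x\<in>A. P x} = {}" by blast
  then have "card {x\<in>A. P x} = 0" by (simp only: card.empty)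
  then show False using a(1) by simp
qed

context twoplanes
begin

lemma self: "twoplanes Pts B1 B2 q" by unfold_locales

lemma sw: "twoplanes Pts B2 B1 q" using twoplanes_swap[OF self] .

lemma ovalpar:
  assumes cw: "cwd Pts B1 B2 Ls Os" and Y: "Y \<in> B2"
  shows "even (card Os + (if Y \<in> Os then q else 0) + card {M\<in>Ls. card (M \<inter> Y) = 1})"
  using twoplanes.linepar[OF sw cwd_swap[OF cw] Y] .

lemma oddA:
  assumes cw: "cwd Pts B1 B2 Ls Os" and ne: "Os \<noteq> {}" and wt: "card Ls + card Os \<le> q + 2"
    and oa: "odd (card Ls)"
  shows "card Ls = 1"
proof -
  have Ls: "Ls \<subseteq> B1" and Os: "Os \<subseteq> B2" using cw unfolding cwd_def by auto
  have finLs: "finite Ls" using Ls p1.finB finite_subset by blast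
  have finOs: "finite Os" using Os p2.finB finite_subset by blast
  have cover: "B1 - Ls \<subseteq> (\<Union>X\<in>Os. {M\<in>B1. card (M \<inter> X) = 1})"
  proof
    fix M assume M: "M \<in> B1 - Ls"
    have "even (card Ls + 0 + card {X\<in>Os. card (X \<inter> M) = 1})"
      using linepar[OF cw, of M] M by simp
    then have o: "odd (card {X\<in>Os. card (X \<inter> M) = 1})" using oa by simp
    have "card {X\<in>Os. card (X \<inter> M) = 1} \<noteq> 0"
    proof
      assume "card {X\<in>Os. card (X \<inter> M) = 1} = 0"
      then show False using o by simp
    qed
    then obtain X where "X \<in> Os" "card (X \<inter> M) = 1" using card_ne0_ex[of Os "\<lambda>X. card (X \<inter> M) = 1"] by blast
    then show "M \<in> (\<Union>X\<in>Os. {M\<in>B1. card (M \<inter> X) = 1})" using M by (auto simp: Int_commute)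
  qed
  have "card (B1 - Ls) \<le> card (\<Union>X\<in>Os. {M\<in>B1. card (M \<inter> X) = 1})"
  proof (rule card_mono[OF _ cover])
    show "finite (\<Union>X\<in>Os. {M\<in>B1. card (M \<inter> X) = 1})"
      by (rule finite_UN_I[OF finOs]) (simp add: p1.finB)
  qed
  also have "\<dots> \<le> (\<Sum>X\<in>Os. card {M\<in>B1. card (M \<inter> X) = 1})" by (rule card_UN_le[OF finOs])
  also have "\<dots> = (\<Sum>X\<in>Os. q+1)"
  proof (rule sum.cong[OF refl])
    fix X assume "X \<in> Os"
    then have "X \<subseteq> Pts" "card X = q+1" "\<forall>b\<in>B1. card (b \<inter> X) \<le> 2" using arcX Os by auto
    then show "card {M\<in>B1. card (M \<inter> X) = 1} = q+1" by (rule p1.tan_card)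
  qed
  also have "\<dots> = card Os * (q+1)" by simp
  finally have c1: "card (B1 - Ls) \<le> card Os * (q+1)" .
  have c2: "card (B1 - Ls) = q*q+q+1 - card Ls" using card_Diff_subset[OF finLs Ls] p1.cardB by simp
  have b1: "card Os \<ge> 1" using ne finOs by (simp add: Suc_le_eq card_gt_0_iff)
  show ?thesis
  proof (rule ccontr)
    assume "card Ls \<noteq> 1"
    moreover have "\<forall>n::nat. odd n \<longrightarrow> n \<noteq> 1 \<longrightarrow> n \<ge> 3" by presburger
    ultimately have a3: "card Ls \<ge> 3" using oa by blast
    then have "card Os + 1 \<le> q" using wt by simp
    then have "(card Os + 1) * (q+1) \<le> q * (q+1)" by (rule mult_le_mono1)
    then have x: "card Os * (q+1) + q + 1 \<le> q*q + q" by (simp add: algebra_simps)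
    have "card Ls \<le> q + 1" using wt b1 by simp
    then show False using c1 c2 x by linarith
  qed
qed

lemma oneone:
  assumes cw: "cwd Pts B1 B2 Ls Os" and a: "card Ls = 1" and b: "card Os = 1"
  shows False
proof -
  obtain L where L: "Ls = {L}" using a by (rule card_1_singletonE)
  obtain X where X: "Os = {X}" using b by (rule card_1_singletonE)
  have LB: "L \<in> B1" and XB: "X \<in> B2" using cw L X unfolding cwd_def by auto
  have "L \<subseteq> X"
  proof
    fix P assume P: "P \<in> L"
    then have PP: "P \<in> Pts" using p1.blk_sub[OF LB] by auto
    have "{L'\<in>Ls. P \<in> L'} = {L}" using L P by auto
    then have c1: "card {L'\<in>Ls. P \<in> L'} = 1" by simp
    have "even (card {L'\<in>Ls. P \<in> L'} + card {X'\<in>Os. P \<in> X'})" using cw PP unfolding cwd_def by blast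
    then have o: "odd (card {X'\<in>Os. P \<in> X'})" using c1 by simp
    have "card {X'\<in>Os. P \<in> X'} \<noteq> 0"
    proof
      assume "card {X'\<in>Os. P \<in> X'} = 0"
      then show False using o by simp
    qed
    then show "P \<in> X" using X card_ne0_ex[of Os "\<lambda>X'. P \<in> X'"] by blast
  qed
  then have "L \<inter> X = L" by auto
  then have "card (L \<inter> X) = q + 1" using p1.blk_card[OF LB] by simp
  moreover have "card (L \<inter> X) \<le> 2" using cross LB XB by simp
  ultimately show False using p1.q2 by simp
qed

lemma aone_beven:
  assumes cw: "cwd Pts B1 B2 Ls Os" and L: "Ls = {L}" and eb: "even (card Os)"
  shows "odd q \<and> Os = {Y\<in>B2. card (Y \<inter> L) = 1}"
proof -
  have LB: "L \<in> B1" and Os: "Os \<subseteq> B2" using cw L unfolding cwd_def by auto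
  have key: "even ((if Y \<in> Os then q else 0) + (if card (L \<inter> Y) = 1 then 1 else 0))" if Y: "Y \<in> B2" for Y
  proof -
    have "{M\<in>Ls. card (M \<inter> Y) = 1} = (if card (L \<inter> Y) = 1 then {L} else {})" using L by auto
    then have "card {M\<in>Ls. card (M \<inter> Y) = 1} = (if card (L \<inter> Y) = 1 then 1 else 0)" by simp
    then show ?thesis using ovalpar[OF cw Y] eb by simp
  qed
  have aL: "L \<subseteq> Pts" "card L = q+1" "\<forall>c\<in>B2. card (c \<inter> L) \<le> 2" using arcL[OF LB] by auto
  have "card {Y\<in>B2. card (Y \<inter> L) = 1} = q+1" by (rule p2.tan_card[OF aL])
  then have "card {Y\<in>B2. card (Y \<inter> L) = 1} \<noteq> 0" by simp
  then obtain Y0 where Y0: "Y0 \<in> B2" "card (Y0 \<inter> L) = 1" using card_ne0_ex[of B2 "\<lambda>Y. card (Y \<inter> L) = 1"] by blast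
  then have "card (L \<inter> Y0) = 1" by (simp add: Int_commute)
  then have oq: "odd q" using key[OF Y0(1)] by (cases "Y0 \<in> Os") auto
  have "Os = {Y\<in>B2. card (Y \<inter> L) = 1}"
  proof (intro set_eqI iffI)
    fix Y assume "Y \<in> Os"
    then have YB: "Y \<in> B2" using Os by auto
    have "even (q + (if card (L \<inter> Y) = 1 then 1 else 0))" using key[OF YB] \<open>Y \<in> Os\<close> by simp
    then have "card (L \<inter> Y) = 1" using oq by (cases "card (L \<inter> Y) = 1") auto
    then have "card (Y \<inter> L) = 1" by (metis Int_commute)
    then show "Y \<in> {Y\<in>B2. card (Y \<inter> L) = 1}" using YB by simp
  next
    fix Y assume "Y \<in> {Y\<in>B2. card (Y \<inter> L) = 1}"
    then have "Y \<in> B2" "card (Y \<inter> L) = 1" by auto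
    then have "Y \<in> B2" "card (L \<inter> Y) = 1" by (auto, metis Int_commute)
    then have "even ((if Y \<in> Os then q else 0) + 1)" using key[of Y] by simp
    then show "Y \<in> Os" using oq by (cases "Y \<in> Os") auto
  qed
  then show ?thesis using oq by simp
qed

end

context twoplanes
begin

lemma evenboth:
  assumes cw: "cwd Pts B1 B2 Ls Os" and ne: "Ls \<noteq> {}" "Os \<noteq> {}"
    and wt: "card Ls + card Os \<le> q + 2"
    and ea: "even (card Ls)" and eb: "even (card Os)"
  shows False
proof -
  have Ls: "Ls \<subseteq> B1" and Os: "Os \<subseteq> B2" using cw unfolding cwd_def by auto
  have finLs: "finite Ls" using Ls p1.finB finite_subset by blast
  have finOs: "finite Os" using Os p2.finB finite_subset by blast
  have a0: "card Ls \<noteq> 0" using ne finLs by simp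
  have b0: "card Os \<noteq> 0" using ne finOs by simp
  have a2: "card Ls \<ge> 2" using a0 ea by presburger
  have b2: "card Os \<ge> 2" using b0 eb by presburger
  obtain L1 where L1: "L1 \<in> Ls" using ne by auto
  have "Ls - {L1} \<noteq> {}"
  proof
    assume "Ls - {L1} = {}"
    then have "Ls = {L1}" using L1 by auto
    then show False using a2 by simp
  qed
  then obtain L2 where L2: "L2 \<in> Ls" "L2 \<noteq> L1" by auto
  define D where "D L = {Y\<in>B2. card (Y \<inter> L) = 1}" for L
  define E where "E L = {Y\<in>B2. card (Y \<inter> L) = 1 \<and> (\<forall>L'\<in>Ls - {L}. card (Y \<inter> L') \<noteq> 1)}" for L
  have EOs: "E L \<subseteq> Os" if "L \<in> Ls" for L
  proof
    fix Y assume Y: "Y \<in> E L"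
    then have YB: "Y \<in> B2" unfolding E_def by auto
    have "{M\<in>Ls. card (M \<inter> Y) = 1} = {L}"
    proof (intro set_eqI iffI)
      fix M assume "M \<in> {M\<in>Ls. card (M \<inter> Y) = 1}"
      then have "M \<in> Ls" "card (Y \<inter> M) = 1" by (auto, metis Int_commute)
      then show "M \<in> {L}" using Y unfolding E_def by auto
    next
      fix M assume "M \<in> {L}"
      then have "M = L" by simp
      moreover have "card (Y \<inter> L) = 1" using Y unfolding E_def by auto
      ultimately have "card (M \<inter> Y) = 1" by (metis Int_commute)
      then show "M \<in> {M\<in>Ls. card (M \<inter> Y) = 1}" using that \<open>M = L\<close> by simp
    qed
    then have "card {M\<in>Ls. card (M \<inter> Y) = 1} = 1" by simp
    then have "even (card Os + (if Y \<in> Os then q else 0) + 1)" using ovalpar[OF cw YB] by simp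
    then show "Y \<in> Os" using eb by (cases "Y \<in> Os") auto
  qed
  have cE: "card (E L) \<ge> q + 2 - card Ls" if L: "L \<in> Ls" for L
  proof -
    have LB: "L \<in> B1" using L Ls by auto
    have aL: "L \<subseteq> Pts" "card L = q+1" "\<forall>c\<in>B2. card (c \<inter> L) \<le> 2" using arcL[OF LB] by auto
    have cD: "card (D L) = q+1" unfolding D_def by (rule p2.tan_card[OF aL])
    have sub: "D L \<subseteq> E L \<union> (\<Union>L'\<in>Ls - {L}. D L \<inter> D L')"
      unfolding D_def E_def by auto
    have finE: "finite (E L)" unfolding E_def using p2.finB by simp
    have finU: "finite (\<Union>L'\<in>Ls - {L}. D L \<inter> D L')"
      by (rule finite_UN_I) (use finLs p2.finB in \<open>auto simp: D_def\<close>)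
    have "q + 1 \<le> card (E L \<union> (\<Union>L'\<in>Ls - {L}. D L \<inter> D L'))"
      using card_mono[OF _ sub] finE finU cD by simp
    also have "\<dots> \<le> card (E L) + card (\<Union>L'\<in>Ls - {L}. D L \<inter> D L')" by (rule card_Un_le)
    also have "card (\<Union>L'\<in>Ls - {L}. D L \<inter> D L') \<le> (\<Sum>L'\<in>Ls - {L}. card (D L \<inter> D L'))"
      using finLs by (intro card_UN_le) simp
    also have "(\<Sum>L'\<in>Ls - {L}. card (D L \<inter> D L')) = (\<Sum>L'\<in>Ls - {L}. 1)"
    proof (rule sum.cong[OF refl])
      fix L' assume "L' \<in> Ls - {L}"
      then have "L' \<in> B1" "L \<noteq> L'" using Ls by auto
      then show "card (D L \<inter> D L') = 1" unfolding D_def using lemmaT[OF LB] by blast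
    qed
    also have "\<dots> = card Ls - 1" using L finLs by (simp add: card_Diff_singleton)
    finally show ?thesis using a0 by arith
  qed
  have disj: "E L1 \<inter> E L2 = {}"
    unfolding E_def using L1 L2 by auto
  have "card (E L1 \<union> E L2) = card (E L1) + card (E L2)"
    using disj p2.finB by (intro card_Un_disjoint) (auto simp: E_def)
  moreover have "card (E L1 \<union> E L2) \<le> card Os"
    using EOs[OF L1] EOs[OF L2(1)] finOs by (intro card_mono) auto
  ultimately have "2 * (q + 2 - card Ls) \<le> card Os" using cE[OF L1] cE[OF L2(1)] by simp
  then show False using wt b2 by simp
qed

lemma mixed:
  assumes cw: "cwd Pts B1 B2 Ls Os" and ne: "Ls \<noteq> {}" "Os \<noteq> {}"
    and wt: "card Ls + card Os \<le> q + 2"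
  shows "odd q \<and> ((\<exists>L\<in>B1. Ls = {L} \<and> Os = {Y\<in>B2. card (Y \<inter> L) = 1})
              \<or> (\<exists>X\<in>B2. Os = {X} \<and> Ls = {M\<in>B1. card (M \<inter> X) = 1}))"
proof -
  have Ls: "Ls \<subseteq> B1" and Os: "Os \<subseteq> B2" using cw unfolding cwd_def by auto
  have cw': "cwd Pts B2 B1 Os Ls" by (rule cwd_swap[OF cw])
  have wt': "card Os + card Ls \<le> q + 2" using wt by simp
  show ?thesis
  proof (cases "odd (card Ls)")
    case oa: True
    have a1: "card Ls = 1" by (rule oddA[OF cw ne(2) wt oa])
    then obtain L where L: "Ls = {L}" by (rule card_1_singletonE)
    show ?thesis
    proof (cases "odd (card Os)")
      case True
      have "card Os = 1" by (rule twoplanes.oddA[OF sw cw' ne(1) wt' True])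
      then show ?thesis using oneone[OF cw a1] by simp
    next
      case False
      then have "odd q \<and> Os = {Y\<in>B2. card (Y \<inter> L) = 1}" using aone_beven[OF cw L] by simp
      moreover have "L \<in> B1" using L Ls by auto
      ultimately show ?thesis using L by blast
    qed
  next
    case ea: False
    show ?thesis
    proof (cases "odd (card Os)")
      case True
      have "card Os = 1" by (rule twoplanes.oddA[OF sw cw' ne(1) wt' True])
      then obtain X where X: "Os = {X}" by (rule card_1_singletonE)
      have "odd q \<and> Ls = {M\<in>B1. card (M \<inter> X) = 1}"
        using twoplanes.aone_beven[OF sw cw' X] ea by simp
      moreover have "X \<in> B2" using X Os by auto
      ultimately show ?thesis using X by blast
    next
      case False
      then show ?thesis using evenboth[OF cw ne wt] ea by simp
    qed
  qed
qed

lemma exist_odd: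
  assumes oq: "odd q" and L: "L \<in> B1"
  shows "cwd Pts B1 B2 {L} {Y\<in>B2. card (Y \<inter> L) = 1}"
proof -
  have aL: "L \<subseteq> Pts" "card L = q+1" "\<forall>c\<in>B2. card (c \<inter> L) \<le> 2" using arcL[OF L] by auto
  have "even (card {L'\<in>{L}. P \<in> L'} + card {X\<in>{Y\<in>B2. card (Y \<inter> L) = 1}. P \<in> X})"
    if P: "P \<in> Pts" for P
  proof -
    have eq: "{X\<in>{Y\<in>B2. card (Y \<inter> L) = 1}. P \<in> X} = {b\<in>B2. P \<in> b \<and> card (b \<inter> L) = 1}" by auto
    show ?thesis
    proof (cases "P \<in> L")
      case True
      then have "{L'\<in>{L}. P \<in> L'} = {L}" by auto
      then have "card {L'\<in>{L}. P \<in> L'} = 1" by simp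
      moreover have "card {b\<in>B2. P \<in> b \<and> card (b \<inter> L) = 1} = 1" by (rule p2.tan_at[OF aL True])
      ultimately show ?thesis using eq by simp
    next
      case False
      then have "{L'\<in>{L}. P \<in> L'} = {}" by auto
      then have c0: "card {L'\<in>{L}. P \<in> L'} = 0" by simp
      have "even (card {b\<in>B2. P \<in> b \<and> card (b \<inter> L) = 1} + q + 1)"
        by (rule p2.tan_off_parity[OF aL P False])
      then have c1: "even (card {X\<in>{Y\<in>B2. card (Y \<inter> L) = 1}. P \<in> X})" using eq oq by simp
      show ?thesis by (simp only: c0 add_0 c1)
    qed
  qed
  then show ?thesis unfolding cwd_def using L by auto
qed

end

context twoplanes
begin

lemma main_abs:
  assumes cw: "cwd Pts B1 B2 Ls Os" and ne: "(Ls, Os) \<noteq> ({}, {})"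
    and wt: "card Ls + card Os \<le> q + 2"
  shows "card Ls + card Os = q + 2
    \<and> (odd q \<longrightarrow> (\<exists>X\<in>B2. Os = {X} \<and> Ls = {M\<in>B1. card (M \<inter> X) = 1})
                 \<or> (\<exists>L\<in>B1. Ls = {L} \<and> Os = {Y\<in>B2. card (Y \<inter> L) = 1}))
    \<and> (even q \<longrightarrow> (Os = {} \<and> (\<forall>P\<in>Pts. card {L\<in>Ls. P \<in> L} = 0 \<or> card {L\<in>Ls. P \<in> L} = 2))
                 \<or> (Ls = {} \<and> (\<forall>P\<in>Pts. card {X\<in>Os. P \<in> X} = 0 \<or> card {X\<in>Os. P \<in> X} = 2)))"
proof -
  have Ls: "Ls \<subseteq> B1" and Os: "Os \<subseteq> B2"
    and ev: "\<forall>P\<in>Pts. even (card {L\<in>Ls. P \<in> L} + card {X\<in>Os. P \<in> X})"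
    using cw unfolding cwd_def by auto
  show ?thesis
  proof (cases "Os = {}")
    case True
    then have "Ls \<noteq> {}" using ne by auto
    moreover have "\<forall>P\<in>Pts. even (card {L\<in>Ls. P \<in> L})" using ev True by simp
    moreover have "card Ls \<le> q + 2" using wt True by simp
    ultimately have r: "card Ls = q + 2 \<and> (\<forall>P\<in>Pts. card {L\<in>Ls. P \<in> L} = 0 \<or> card {L\<in>Ls. P \<in> L} = 2) \<and> even q"
      using p1.pure[OF Ls] by blast
    then show ?thesis using True by simp
  next
    case Onz: False
    show ?thesis
    proof (cases "Ls = {}")
      case True
      have "\<forall>P\<in>Pts. even (card {X\<in>Os. P \<in> X})" using ev True by simp
      moreover have "card Os \<le> q + 2" using wt True by simp
      ultimately have r: "card Os = q + 2 \<and> (\<forall>P\<in>Pts. card {X\<in>Os. P \<in> X} = 0 \<or> card {X\<in>Os. P \<in> X} = 2) \<and> even q"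
        using p2.pure[OF Os Onz] by blast
      then show ?thesis using True by simp
    next
      case Lnz: False
      have m: "odd q \<and> ((\<exists>L\<in>B1. Ls = {L} \<and> Os = {Y\<in>B2. card (Y \<inter> L) = 1})
              \<or> (\<exists>X\<in>B2. Os = {X} \<and> Ls = {M\<in>B1. card (M \<inter> X) = 1}))"
        by (rule mixed[OF cw Lnz Onz wt])
      have "card Ls + card Os = q + 2"
      proof -
        { fix L assume L: "L \<in> B1" "Ls = {L}" "Os = {Y\<in>B2. card (Y \<inter> L) = 1}"
          have aL: "L \<subseteq> Pts" "card L = q+1" "\<forall>c\<in>B2. card (c \<inter> L) \<le> 2" using arcL[OF L(1)] by auto
          have "card Os = q + 1" using p2.tan_card[OF aL] L by simp
          then have ?thesis using L by simp }
        moreover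
        { fix X assume X: "X \<in> B2" "Os = {X}" "Ls = {M\<in>B1. card (M \<inter> X) = 1}"
          have aX: "X \<subseteq> Pts" "card X = q+1" "\<forall>b\<in>B1. card (b \<inter> X) \<le> 2" using arcX[OF X(1)] by auto
          have "card Ls = q + 1" using p1.tan_card[OF aX] X by simp
          then have ?thesis using X by simp }
        ultimately show ?thesis using m by blast
      qed
      then show ?thesis using m by blast
    qed
  qed
qed

end

definition dotp :: "'a::field ^ 3 \<Rightarrow> 'a ^ 3 \<Rightarrow> 'a" where
  "dotp u v = (u$1)*(v$1) + (u$2)*(v$2) + (u$3)*(v$3)"

definition crs :: "'a::field ^ 3 \<Rightarrow> 'a ^ 3 \<Rightarrow> 'a ^ 3" where
  "crs u v = (\<chi> i. if i = 1 then (u$2)*(v$3) - (u$3)*(v$2) else if i = 2 then (u$3)*(v$1) - (u$1)*(v$3)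
                else (u$1)*(v$2) - (u$2)*(v$1))"

lemma crs_comp [simp]:
  "crs u v $ 1 = (u$2)*(v$3) - (u$3)*(v$2)"
  "crs u v $ 2 = (u$3)*(v$1) - (u$1)*(v$3)"
  "crs u v $ 3 = (u$1)*(v$2) - (u$2)*(v$1)"
  unfolding crs_def by simp_all

lemma vec3_eq: "(x::'a^3) = y \<longleftrightarrow> (x$1) = (y$1) \<and> (x$2) = (y$2) \<and> (x$3) = (y$3)"
  by (simp add: vec_eq_iff forall_3)

lemma vec3_zero: "(x::'a::zero^3) = 0 \<longleftrightarrow> (x$1) = 0 \<and> (x$2) = 0 \<and> (x$3) = 0"
  by (simp add: vec_eq_iff forall_3)

lemma dot_smult_l [simp]: "dotp (c *s u) v = c * dotp u v"
  unfolding dotp_def by (simp add: algebra_simps)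
lemma dot_smult_r [simp]: "dotp u (c *s v) = c * dotp u v"
  unfolding dotp_def by (simp add: algebra_simps)
lemma dot_add_l [simp]: "dotp (u + w) v = dotp u v + dotp w v"
  unfolding dotp_def by (simp add: algebra_simps)
lemma dot_comm: "dotp u v = dotp v u"
  unfolding dotp_def by (simp add: algebra_simps)
lemma dot_crs1 [simp]: "dotp u (crs u v) = 0"
  unfolding dotp_def by (simp add: algebra_simps)
lemma dot_crs2 [simp]: "dotp v (crs u v) = 0"
  unfolding dotp_def by (simp add: algebra_simps)
lemma dot_zero_l [simp]: "dotp 0 v = 0"
  unfolding dotp_def by simp

lemma crs_self [simp]: "crs u u = 0"
  by (simp add: vec3_zero)
lemma crs_smult_l [simp]: "crs (c *s u) v = c *s crs u v"
  by (simp add: vec3_eq algebra_simps)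
lemma crs_smult_r [simp]: "crs u (c *s v) = c *s crs u v"
  by (simp add: vec3_eq algebra_simps)
lemma crs_add_l: "crs (u + w) v = crs u v + crs w v"
  by (simp add: vec3_eq algebra_simps)
lemma crs_add_r: "crs u (v + w) = crs u v + crs u w"
  by (simp add: vec3_eq algebra_simps)
lemma crs_anti: "crs v u = - crs u v"
  by (simp add: vec3_eq algebra_simps)

lemma bac: "crs (crs u v) h = (dotp u h) *s v - (dotp v h) *s u"
  unfolding dotp_def by (simp add: vec3_eq algebra_simps)

lemma crs_zero_par:
  fixes u v :: "'a::field ^ 3"
  assumes u: "u \<noteq> 0" and c: "crs u v = 0"
  shows "\<exists>k. v = k *s u"
proof -
  have e: "(u$2)*(v$3) = (u$3)*(v$2)" "(u$3)*(v$1) = (u$1)*(v$3)" "(u$1)*(v$2) = (u$2)*(v$1)"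
    using c by (simp_all add: vec3_zero)
  consider "(u$1) \<noteq> 0" | "(u$2) \<noteq> 0" | "(u$3) \<noteq> 0" using u by (auto simp: vec3_zero)
  then show ?thesis
  proof cases
    case 1
    have "v = (v$1 / (u$1)) *s u" using 1 e by (simp add: vec3_eq field_simps)
    then show ?thesis ..
  next
    case 2
    have "v = (v$2 / (u$2)) *s u" using 2 e by (simp add: vec3_eq field_simps)
    then show ?thesis ..
  next
    case 3
    have "v = (v$3 / (u$3)) *s u" using 3 e by (simp add: vec3_eq field_simps)
    then show ?thesis ..
  qed
qed


definition indep :: "'a::field ^ 3 \<Rightarrow> 'a ^ 3 \<Rightarrow> bool" where
  "indep u v \<longleftrightarrow> (\<forall>a b. a *s u + b *s v = 0 \<longrightarrow> a = 0 \<and> b = 0)"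

definition kr :: "'a::field ^ 3 \<Rightarrow> ('a ^ 3) set" where
  "kr h = {x. dotp x h = 0}"

definition spn :: "'a::field ^ 3 \<Rightarrow> 'a ^ 3 \<Rightarrow> ('a ^ 3) set" where
  "spn u v = {a *s u + b *s v | a b. True}"

lemma smult_zero_iff: "(c::'a::field) *s v = 0 \<longleftrightarrow> c = 0 \<or> v = 0"
  by (auto simp: vec3_zero)

lemma indep_crs: "indep u v \<longleftrightarrow> crs u v \<noteq> 0"
proof
  assume i: "indep u v"
  show "crs u v \<noteq> 0"
  proof
    assume c: "crs u v = 0"
    have "u \<noteq> 0"
    proof
      assume "u = 0"
      then have "1 *s u + 0 *s v = 0" by (simp add: vec3_zero)
      then have "(1::'a) = 0" using i unfolding indep_def by blast
      then show False by simp
    qed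
    then obtain k where "v = k *s u" using crs_zero_par c by blast
    then have "k *s u + (-1) *s v = 0" by (simp add: vec3_eq)
    then have "(-1::'a) = 0" using i unfolding indep_def by blast
    then show False by simp
  qed
next
  assume c: "crs u v \<noteq> 0"
  show "indep u v" unfolding indep_def
  proof (intro allI impI)
    fix a b assume ab: "a *s u + b *s v = 0"
    have "crs (a *s u + b *s v) v = 0" using ab by (simp add: vec3_zero)
    then have "a *s crs u v = 0" by (simp add: crs_add_l)
    then have a0: "a = 0" using c by (simp add: smult_zero_iff)
    have "crs u (a *s u + b *s v) = 0" using ab by (simp add: vec3_zero)
    then have "b *s crs u v = 0" by (simp add: crs_add_r)
    then have "b = 0" using c by (simp add: smult_zero_iff)
    then show "a = 0 \<and> b = 0" using a0 by simp
  qed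
qed

lemma vec3_eqI: "(x::'a^3)$1 = y$1 \<Longrightarrow> x$2 = y$2 \<Longrightarrow> x$3 = y$3 \<Longrightarrow> x = y"
  by (simp add: vec3_eq)

lemma solve2:
  fixes x u v :: "'a::field ^ 3"
  assumes H: "H \<noteq> 0" and e: "H *s x = A *s u + B *s v"
  shows "x = (A/H) *s u + (B/H) *s v"
proof -
  have c: "H * (x$i) = A * (u$i) + B * (v$i)" for i using e by (simp add: vec_eq_iff)
  show ?thesis using H c by (simp add: vec_eq_iff field_simps)
qed

lemma spn_kr:
  assumes i: "indep u v"
  shows "spn u v = kr (crs u v)"
proof
  show "spn u v \<subseteq> kr (crs u v)" unfolding spn_def kr_def by auto
next
  show "kr (crs u v) \<subseteq> spn u v"
  proof
    fix x assume "x \<in> kr (crs u v)"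
    then have d: "dotp x (crs u v) = 0" unfolding kr_def by simp
    have h: "crs u v \<noteq> 0" using i indep_crs by blast
    let ?h = "crs u v"
    have d': "(x$1) * (?h$1) + (x$2) * (?h$2) + (x$3) * (?h$3) = 0" using d unfolding dotp_def .
    consider "?h$1 \<noteq> 0" | "?h$2 \<noteq> 0" | "?h$3 \<noteq> 0" using h by (auto simp: vec3_zero)
    then show "x \<in> spn u v"
    proof cases
      case 1
      have d'': "(x$1)*((u$2)*(v$3) - (u$3)*(v$2)) + (x$2)*((u$3)*(v$1) - (u$1)*(v$3)) + (x$3)*((u$1)*(v$2) - (u$2)*(v$1)) = 0"
        using d' by simp
      have "(?h$1) *s x = ((x$2)*(v$3) - (x$3)*(v$2)) *s u + ((u$2)*(x$3) - (u$3)*(x$2)) *s v"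
      proof (rule vec3_eqI)
        show "((?h$1) *s x)$1 = (((x$2)*(v$3) - (x$3)*(v$2)) *s u + ((u$2)*(x$3) - (u$3)*(x$2)) *s v)$1" using d'' by simp algebra
        show "((?h$1) *s x)$2 = (((x$2)*(v$3) - (x$3)*(v$2)) *s u + ((u$2)*(x$3) - (u$3)*(x$2)) *s v)$2" by (simp add: algebra_simps)
        show "((?h$1) *s x)$3 = (((x$2)*(v$3) - (x$3)*(v$2)) *s u + ((u$2)*(x$3) - (u$3)*(x$2)) *s v)$3" by (simp add: algebra_simps)
      qed
      then have "x = (((x$2)*(v$3) - (x$3)*(v$2)) / (?h$1)) *s u + (((u$2)*(x$3) - (u$3)*(x$2)) / (?h$1)) *s v"
        using 1 by (intro solve2)
      then show ?thesis unfolding spn_def by blast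
    next
      case 2
      have d'': "(x$1)*((u$2)*(v$3) - (u$3)*(v$2)) + (x$2)*((u$3)*(v$1) - (u$1)*(v$3)) + (x$3)*((u$1)*(v$2) - (u$2)*(v$1)) = 0"
        using d' by simp
      have "(?h$2) *s x = ((x$3)*(v$1) - (x$1)*(v$3)) *s u + ((u$3)*(x$1) - (u$1)*(x$3)) *s v"
      proof (rule vec3_eqI)
        show "((?h$2) *s x)$1 = (((x$3)*(v$1) - (x$1)*(v$3)) *s u + ((u$3)*(x$1) - (u$1)*(x$3)) *s v)$1" by (simp add: algebra_simps)
        show "((?h$2) *s x)$2 = (((x$3)*(v$1) - (x$1)*(v$3)) *s u + ((u$3)*(x$1) - (u$1)*(x$3)) *s v)$2" using d'' by simp algebra
        show "((?h$2) *s x)$3 = (((x$3)*(v$1) - (x$1)*(v$3)) *s u + ((u$3)*(x$1) - (u$1)*(x$3)) *s v)$3" by (simp add: algebra_simps)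
      qed
      then have "x = (((x$3)*(v$1) - (x$1)*(v$3)) / (?h$2)) *s u + (((u$3)*(x$1) - (u$1)*(x$3)) / (?h$2)) *s v"
        using 2 by (intro solve2)
      then show ?thesis unfolding spn_def by blast
    next
      case 3
      have d'': "(x$1)*((u$2)*(v$3) - (u$3)*(v$2)) + (x$2)*((u$3)*(v$1) - (u$1)*(v$3)) + (x$3)*((u$1)*(v$2) - (u$2)*(v$1)) = 0"
        using d' by simp
      have "(?h$3) *s x = ((x$1)*(v$2) - (x$2)*(v$1)) *s u + ((u$1)*(x$2) - (u$2)*(x$1)) *s v"
      proof (rule vec3_eqI)
        show "((?h$3) *s x)$1 = (((x$1)*(v$2) - (x$2)*(v$1)) *s u + ((u$1)*(x$2) - (u$2)*(x$1)) *s v)$1" by (simp add: algebra_simps)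
        show "((?h$3) *s x)$2 = (((x$1)*(v$2) - (x$2)*(v$1)) *s u + ((u$1)*(x$2) - (u$2)*(x$1)) *s v)$2" by (simp add: algebra_simps)
        show "((?h$3) *s x)$3 = (((x$1)*(v$2) - (x$2)*(v$1)) *s u + ((u$1)*(x$2) - (u$2)*(x$1)) *s v)$3" using d'' by simp algebra
      qed
      then have "x = (((x$1)*(v$2) - (x$2)*(v$1)) / (?h$3)) *s u + (((u$1)*(x$2) - (u$2)*(x$1)) / (?h$3)) *s v"
        using 3 by (intro solve2)
      then show ?thesis unfolding spn_def by blast
    qed
  qed
qed


definition vec3 :: "'a \<Rightarrow> 'a \<Rightarrow> 'a \<Rightarrow> 'a ^ 3" where
  "vec3 a b c = (\<chi> i. if i = 1 then a else if i = 2 then b else c)"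

lemma vec3_comp [simp]: "vec3 a b c $ 1 = a" "vec3 a b c $ 2 = b" "vec3 a b c $ 3 = c"
  unfolding vec3_def by simp_all

lemma one_smult [simp]: "(1::'a::field) *s v = v"
  by (simp add: vec3_eq)

lemma crs_ne0_par:
  assumes "crs u v = k *s h" "k \<noteq> 0" "h \<noteq> 0"
  shows "indep u v"
  using assms by (simp add: indep_crs smult_zero_iff)

lemma kr_basis:
  fixes h :: "'a::field ^ 3"
  assumes h: "h \<noteq> 0"
  shows "\<exists>u v. indep u v \<and> dotp u h = 0 \<and> dotp v h = 0"
proof -
  consider "h$1 \<noteq> 0" | "h$2 \<noteq> 0" | "h$3 \<noteq> 0" using h by (auto simp: vec3_zero)
  then show ?thesis
  proof cases
    case 1
    let ?u = "vec3 (-(h$2)) (h$1) 0" and ?v = "vec3 (-(h$3)) 0 (h$1)"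
    have "crs ?u ?v = (h$1) *s h" by (simp add: vec3_eq algebra_simps)
    then have "indep ?u ?v" using 1 h by (rule crs_ne0_par)
    moreover have "dotp ?u h = 0" "dotp ?v h = 0" unfolding dotp_def by (simp_all add: algebra_simps)
    ultimately show ?thesis by blast
  next
    case 2
    let ?u = "vec3 (h$2) (-(h$1)) 0" and ?v = "vec3 0 (-(h$3)) (h$2)"
    have c: "crs ?u ?v = (-(h$2)) *s h" by (simp add: vec3_eq algebra_simps)
    have k: "-(h$2) \<noteq> 0" using 2 by simp
    have "indep ?u ?v" by (rule crs_ne0_par[OF c k h])
    moreover have "dotp ?u h = 0" "dotp ?v h = 0" unfolding dotp_def by (simp_all add: algebra_simps)
    ultimately show ?thesis by blast
  next
    case 3
    let ?u = "vec3 (h$3) 0 (-(h$1))" and ?v = "vec3 0 (h$3) (-(h$2))"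
    have "crs ?u ?v = (h$3) *s h" by (simp add: vec3_eq algebra_simps)
    then have "indep ?u ?v" using 3 h by (rule crs_ne0_par)
    moreover have "dotp ?u h = 0" "dotp ?v h = 0" unfolding dotp_def by (simp_all add: algebra_simps)
    ultimately show ?thesis by blast
  qed
qed

lemma kr_smult: "k \<noteq> 0 \<Longrightarrow> kr (k *s g) = kr g"
  unfolding kr_def by simp

lemma kr_par:
  assumes "g \<noteq> 0" "crs g h = 0" "h \<noteq> 0"
  shows "kr h = kr g"
proof -
  obtain k where k: "h = k *s g" using crs_zero_par assms by blast
  then have "k \<noteq> 0" using assms(3) by auto
  then show ?thesis using k kr_smult by simp
qed

lemma kr_eq_iff:
  assumes h: "h \<noteq> 0" and h': "h' \<noteq> 0"
  shows "kr h = kr h' \<longleftrightarrow> crs h h' = 0"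
proof
  assume "crs h h' = 0"
  then show "kr h = kr h'" using kr_par[OF h _ h'] by simp
next
  assume e: "kr h = kr h'"
  obtain u v where uv: "indep u v" "dotp u h = 0" "dotp v h = 0" using kr_basis[OF h] by blast
  have w: "crs u v \<noteq> 0" using uv indep_crs by blast
  have "u \<in> kr h'" "v \<in> kr h'" using uv e unfolding kr_def by auto
  then have d: "dotp u h' = 0" "dotp v h' = 0" unfolding kr_def by auto
  have "crs (crs u v) h = 0" using uv by (simp add: bac vec3_zero)
  then obtain k where k: "h = k *s crs u v" using crs_zero_par w by blast
  have "crs (crs u v) h' = 0" using d by (simp add: bac vec3_zero)
  then obtain k' where k': "h' = k' *s crs u v" using crs_zero_par w by blast
  show "crs h h' = 0" using k k' by simp
qed

definition pt :: "'a::field ^ 3 \<Rightarrow> ('a ^ 3) set" where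
  "pt v = {c *s v | c. True}"

lemma in_pt: "v \<in> pt v"
  unfolding pt_def by (metis (mono_tags, lifting) mem_Collect_eq one_smult)

lemma pg_points_eq: "pg_points = {pt v | v. v \<noteq> 0}"
  unfolding pg_points_def pt_def by auto

lemma pt_in: "v \<noteq> 0 \<Longrightarrow> pt v \<in> pg_points"
proof -
  assume "v \<noteq> 0"
  then have "pt v \<in> {pt w | w. w \<noteq> 0}" by blast
  then show ?thesis by (simp only: pg_points_eq)
qed

lemma pt_sub_kr: "pt v \<subseteq> kr h \<longleftrightarrow> dotp v h = 0"
proof
  assume "pt v \<subseteq> kr h"
  then show "dotp v h = 0" using in_pt unfolding kr_def by blast
next
  assume "dotp v h = 0"
  then show "pt v \<subseteq> kr h" unfolding pt_def kr_def by auto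
qed

lemma pt_eq_iff:
  assumes v: "v \<noteq> 0" and w: "w \<noteq> 0"
  shows "pt v = pt w \<longleftrightarrow> crs v w = 0"
proof
  assume "pt v = pt w"
  then have "w \<in> pt v" using in_pt by blast
  then obtain c where "w = c *s v" unfolding pt_def by blast
  then show "crs v w = 0" by simp
next
  assume "crs v w = 0"
  then obtain k where k: "w = k *s v" using crs_zero_par v by blast
  then have k0: "k \<noteq> 0" using w by auto
  show "pt v = pt w"
  proof
    show "pt v \<subseteq> pt w"
    proof
      fix x assume "x \<in> pt v"
      then obtain c where "x = c *s v" unfolding pt_def by blast
      then have "x = (c / k) *s w" using k k0 by (simp add: vec3_eq)
      then show "x \<in> pt w" unfolding pt_def by blast
    qed
  next
    show "pt w \<subseteq> pt v"
    proof
      fix x assume "x \<in> pt w"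
      then obtain c where "x = c *s w" unfolding pt_def by blast
      then have "x = (c * k) *s v" using k by (simp add: vec3_eq)
      then show "x \<in> pt v" unfolding pt_def by blast
    qed
  qed
qed

lemma pt_of_mem: "x \<in> pt v \<Longrightarrow> x \<noteq> 0 \<Longrightarrow> v \<noteq> 0 \<Longrightarrow> pt x = pt v"
proof -
  assume "x \<in> pt v" "x \<noteq> 0" "v \<noteq> 0"
  then obtain c where "x = c *s v" unfolding pt_def by blast
  then have "crs x v = 0" by simp
  then show "pt x = pt v" using pt_eq_iff[OF \<open>x \<noteq> 0\<close> \<open>v \<noteq> 0\<close>] by simp
qed

lemma lines_kr: "L \<in> pg_lines \<longleftrightarrow> (\<exists>h. h \<noteq> 0 \<and> L = kr h)"
proof
  assume "L \<in> pg_lines"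
  then have "\<exists>u v. (\<forall>a b. a *s u + b *s v = 0 \<longrightarrow> a = 0 \<and> b = 0) \<and> L = {a *s u + b *s v | a b. True}"
    unfolding pg_lines_def by (rule CollectD)
  then obtain u v where i: "\<forall>a b. a *s u + b *s v = 0 \<longrightarrow> a = 0 \<and> b = 0"
    and l: "L = {a *s u + b *s v | a b. True}" by blast
  have "indep u v" unfolding indep_def using i .
  moreover have "L = spn u v" unfolding spn_def using l .
  ultimately have "indep u v" "L = spn u v" by auto
  then have "L = kr (crs u v)" "crs u v \<noteq> 0" using spn_kr indep_crs by blast+
  then show "\<exists>h. h \<noteq> 0 \<and> L = kr h" by blast
next
  assume "\<exists>h. h \<noteq> 0 \<and> L = kr h"
  then obtain h where h: "h \<noteq> 0" "L = kr h" by blast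
  obtain u v where uv: "indep u v" "dotp u h = 0" "dotp v h = 0" using kr_basis[OF h(1)] by blast
  have w: "crs u v \<noteq> 0" using uv indep_crs by blast
  have "crs (crs u v) h = 0" using uv by (simp add: bac vec3_zero)
  then have "kr h = kr (crs u v)" using kr_par[OF w _ h(1)] by simp
  then have "L = spn u v" using h spn_kr[OF uv(1)] by simp
  then have l: "L = {a *s u + b *s v | a b. True}" unfolding spn_def .
  have i: "\<forall>a b. a *s u + b *s v = 0 \<longrightarrow> a = 0 \<and> b = 0" using uv(1) unfolding indep_def .
  have "\<exists>u v. (\<forall>a b. a *s u + b *s v = 0 \<longrightarrow> a = 0 \<and> b = 0) \<and> L = {a *s u + b *s v | a b. True}"
    using i l by blast
  then show "L \<in> pg_lines" unfolding pg_lines_def by (rule CollectI)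
qed

definition pts :: "('a::field ^ 3) set \<Rightarrow> ('a ^ 3) set set" where
  "pts L = {P \<in> pg_points. P \<subseteq> L}"

lemma kr_recover: "kr h = insert 0 (\<Union> (pts (kr h)))"
proof
  show "kr h \<subseteq> insert 0 (\<Union> (pts (kr h)))"
  proof
    fix x assume x: "x \<in> kr h"
    show "x \<in> insert 0 (\<Union> (pts (kr h)))"
    proof (cases "x = 0")
      case False
      then have "pt x \<in> pg_points" by (rule pt_in)
      moreover have "dotp x h = 0" using x unfolding kr_def by simp
      then have "pt x \<subseteq> kr h" by (simp only: pt_sub_kr)
      ultimately have "pt x \<in> pts (kr h)" unfolding pts_def by blast
      moreover have "x \<in> pt x" by (rule in_pt)
      ultimately show ?thesis by blast
    qed simp
  qed
next
  show "insert 0 (\<Union> (pts (kr h))) \<subseteq> kr h"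
  proof
    fix x assume "x \<in> insert 0 (\<Union> (pts (kr h)))"
    then show "x \<in> kr h"
    proof
      assume "x = 0" then show ?thesis unfolding kr_def by simp
    next
      assume "x \<in> \<Union> (pts (kr h))"
      then obtain P where "P \<in> pts (kr h)" "x \<in> P" by blast
      then show ?thesis unfolding pts_def by blast
    qed
  qed
qed

lemma pts_inj: "inj_on pts pg_lines"
proof (rule inj_onI)
  fix L L' assume "L \<in> pg_lines" "L' \<in> pg_lines" "pts L = pts L'"
  then obtain h h' where hh: "L = kr h" "L' = kr h'"
    using lines_kr[THEN iffD1] by meson
  have "kr h = insert 0 (\<Union> (pts (kr h)))" by (rule kr_recover)
  also have "\<dots> = insert 0 (\<Union> (pts (kr h')))" using hh \<open>pts L = pts L'\<close> by simp
  also have "\<dots> = kr h'" by (rule kr_recover[symmetric])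
  finally show "L = L'" using hh by simp
qed


lemma crs_zero_r [simp]: "crs u 0 = 0" by (simp add: vec3_zero)
lemma crs_zero_l [simp]: "crs 0 u = 0" by (simp add: vec3_zero)

lemma ptsk_mem: "v \<noteq> 0 \<Longrightarrow> pt v \<in> pts (kr h) \<longleftrightarrow> dotp v h = 0"
  unfolding pts_def using pt_in pt_sub_kr by blast

lemma points_cases: "P \<in> pg_points \<Longrightarrow> \<exists>v. v \<noteq> 0 \<and> P = pt v"
  unfolding pg_points_eq by blast

lemma ptsk_cases: "P \<in> pts (kr h) \<Longrightarrow> \<exists>v. v \<noteq> 0 \<and> P = pt v \<and> dotp v h = 0"
proof -
  assume a: "P \<in> pts (kr h)"
  then have "P \<in> pg_points" "P \<subseteq> kr h" unfolding pts_def by auto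
  then obtain v where "v \<noteq> 0" "P = pt v" using points_cases by blast
  then show ?thesis using \<open>P \<subseteq> kr h\<close> pt_sub_kr by blast
qed

lemma finite_points: "finite (pg_points :: ('a::{finite,field} ^ 3) set set)"
proof -
  have "pg_points \<subseteq> Pow (UNIV :: ('a ^ 3) set)" by auto
  then show ?thesis by (rule finite_subset) simp
qed

lemma card_line_pts:
  fixes h :: "'a::{finite,field} ^ 3"
  assumes h: "h \<noteq> 0"
  shows "card (pts (kr h)) = CARD('a) + 1"
proof -
  obtain u v where uv: "indep u v" "dotp u h = 0" "dotp v h = 0" using kr_basis[OF h] by blast
  have w: "crs u v \<noteq> 0" using uv indep_crs by blast
  have "crs (crs u v) h = 0" using uv by (simp add: bac vec3_zero)
  then have krh: "kr h = kr (crs u v)" using kr_par[OF w _ h] by simp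
  have sp: "spn u v = kr h" using spn_kr[OF uv(1)] krh by simp
  have v0: "v \<noteq> 0" using w by auto
  define \<phi> where "\<phi> t = pt (u + t *s v)" for t
  have nz: "u + t *s v \<noteq> 0" for t
  proof
    assume "u + t *s v = 0"
    then have "1 *s u + t *s v = 0" by simp
    then have "(1::'a) = 0 \<and> t = 0" using uv(1) unfolding indep_def by blast
    then show False by simp
  qed
  have crs_uv: "crs (u + s *s v) (u + t *s v) = (t - s) *s crs u v" for s t
    by (simp add: vec3_eq algebra_simps)
  have inj: "inj \<phi>"
  proof (rule injI)
    fix s t assume "\<phi> s = \<phi> t"
    then have "crs (u + s *s v) (u + t *s v) = 0" unfolding \<phi>_def using pt_eq_iff nz by blast
    then have "(t - s) *s crs u v = 0" using crs_uv by simp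
    then show "s = t" using w by (simp add: smult_zero_iff)
  qed
  have notv: "pt v \<notin> range \<phi>"
  proof
    assume "pt v \<in> range \<phi>"
    then obtain t where "pt v = pt (u + t *s v)" unfolding \<phi>_def by blast
    then have "crs v (u + t *s v) = 0" using pt_eq_iff v0 nz by blast
    moreover have "crs v (u + t *s v) = - crs u v" by (simp add: vec3_eq algebra_simps)
    ultimately show False using w by simp
  qed
  have in_kr: "x \<in> kr h" if "x \<in> spn u v" for x using that sp by simp
  have eq: "pts (kr h) = insert (pt v) (range \<phi>)"
  proof
    show "pts (kr h) \<subseteq> insert (pt v) (range \<phi>)"
    proof
      fix P assume "P \<in> pts (kr h)"
      then obtain x where x: "x \<noteq> 0" "P = pt x" "dotp x h = 0" using ptsk_cases by blast
      then have "x \<in> spn u v" using sp unfolding kr_def by auto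
      then obtain a b where ab: "x = a *s u + b *s v" unfolding spn_def by blast
      show "P \<in> insert (pt v) (range \<phi>)"
      proof (cases "a = 0")
        case True
        then have "crs x v = 0" using ab by simp
        then have "P = pt v" using x pt_eq_iff v0 by blast
        then show ?thesis by simp
      next
        case False
        have "crs x (u + (b/a) *s v) = 0" using ab False by (simp add: vec3_eq field_simps)
        then have "P = \<phi> (b/a)" unfolding \<phi>_def using x pt_eq_iff nz by blast
        then show ?thesis by simp
      qed
    qed
  next
    show "insert (pt v) (range \<phi>) \<subseteq> pts (kr h)"
    proof
      fix P assume "P \<in> insert (pt v) (range \<phi>)"
      then show "P \<in> pts (kr h)"
      proof
        assume "P = pt v"
        then show ?thesis using ptsk_mem[OF v0, of h] uv(3) by simp
      next
        assume "P \<in> range \<phi>"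
        then obtain t where t: "P = pt (u + t *s v)" unfolding \<phi>_def by blast
        have "u + t *s v = 1 *s u + t *s v" by simp
        then have "u + t *s v \<in> spn u v" unfolding spn_def by blast
        then have "dotp (u + t *s v) h = 0" using sp unfolding kr_def by auto
        then show ?thesis using t ptsk_mem[OF nz[of t], of h] by simp
      qed
    qed
  qed
  have "card (range \<phi>) = CARD('a)" using inj by (simp add: card_image)
  then show ?thesis using eq notv by simp
qed


lemma card_points: "card (pg_points :: ('a::{finite,field} ^ 3) set set) = CARD('a) * CARD('a) + CARD('a) + 1"
proof -
  define e1 :: "'a ^ 3" where "e1 = vec3 1 0 0"
  have e10: "e1 \<noteq> 0" unfolding e1_def by (simp add: vec3_zero)
  define \<psi> :: "'a \<times> 'a \<Rightarrow> ('a ^ 3) set" where "\<psi> p = pt (vec3 1 (fst p) (snd p))" for p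
  have nz: "vec3 1 a b \<noteq> (0::'a^3)" for a b by (simp add: vec3_zero)
  have inj: "inj \<psi>"
  proof (rule injI)
    fix p p' assume "\<psi> p = \<psi> p'"
    then have "crs (vec3 1 (fst p) (snd p)) (vec3 1 (fst p') (snd p')) = 0"
      unfolding \<psi>_def using pt_eq_iff nz by blast
    then have "snd p = snd p'" "fst p' = fst p" by (simp_all add: vec3_zero)
    then show "p = p'" by (simp add: prod_eq_iff)
  qed
  have disj: "pts (kr e1) \<inter> range \<psi> = {}"
  proof -
    { fix p assume "\<psi> p \<in> pts (kr e1)"
      then have "dotp (vec3 1 (fst p) (snd p)) e1 = 0" unfolding \<psi>_def using ptsk_mem nz by blast
      then have False unfolding e1_def dotp_def by simp }
    then show ?thesis by blast
  qed
  have eq: "(pg_points :: ('a ^ 3) set set) = pts (kr e1) \<union> range \<psi>"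
  proof
    show "(pg_points :: ('a ^ 3) set set) \<subseteq> pts (kr e1) \<union> range \<psi>"
    proof
      fix P :: "('a ^ 3) set" assume "P \<in> pg_points"
      then obtain x where x: "x \<noteq> 0" "P = pt x" using points_cases by blast
      show "P \<in> pts (kr e1) \<union> range \<psi>"
      proof (cases "x$1 = 0")
        case True
        then have "dotp x e1 = 0" unfolding e1_def dotp_def by simp
        then show ?thesis using x ptsk_mem by blast
      next
        case False
        have "crs x (vec3 1 ((x$2)/(x$1)) ((x$3)/(x$1))) = 0" using False
          by (simp add: vec3_zero field_simps)
        then have "pt x = pt (vec3 1 ((x$2)/(x$1)) ((x$3)/(x$1)))"
          using pt_eq_iff[OF x(1) nz[of "(x$2)/(x$1)" "(x$3)/(x$1)"]] by simp
        then have "P = \<psi> ((x$2)/(x$1), (x$3)/(x$1))" unfolding \<psi>_def using x by simp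
        then show ?thesis by blast
      qed
    qed
  next
    show "pts (kr e1) \<union> range \<psi> \<subseteq> (pg_points :: ('a ^ 3) set set)"
      unfolding pts_def \<psi>_def using pt_in nz by auto
  qed
  have "card (range \<psi>) = card (UNIV :: ('a \<times> 'a) set)"
    using inj by (simp add: card_image)
  also have "\<dots> = card ((UNIV :: 'a set) \<times> (UNIV :: 'a set))" by simp
  also have "\<dots> = CARD('a) * CARD('a)" by (rule card_cartesian_product)
  finally have "card (range \<psi>) = CARD('a) * CARD('a)" .
  moreover have "card (pts (kr e1)) = CARD('a) + 1" using card_line_pts[OF e10] .
  moreover have "finite (pts (kr e1))" "finite (range \<psi>)" by simp_all
  moreover have "card (pts (kr e1) \<union> range \<psi>) = card (pts (kr e1)) + card (range \<psi>)"
    using disj by (intro card_Un_disjoint) simp_all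
  ultimately show ?thesis unfolding eq by simp
qed

definition dlin :: "('a::field ^ 3) set \<Rightarrow> ('a ^ 3) set" where
  "dlin P = {x. \<forall>y\<in>P. dotp x y = 0}"

lemma dlin_pt: "dlin (pt v) = kr v"
proof
  show "dlin (pt v) \<subseteq> kr v" unfolding dlin_def kr_def using in_pt by blast
next
  show "kr v \<subseteq> dlin (pt v)" unfolding dlin_def kr_def pt_def by auto
qed

lemma dlin_line: "P \<in> pg_points \<Longrightarrow> dlin P \<in> pg_lines"
proof -
  assume "P \<in> pg_points"
  then obtain v where "v \<noteq> 0" "P = pt v" using points_cases by blast
  then show ?thesis using dlin_pt lines_kr by metis
qed

lemma dlin_inj: "inj_on dlin pg_points"
proof (rule inj_onI)
  fix P Q assume P: "P \<in> pg_points" and Q: "Q \<in> pg_points" and e: "dlin P = dlin Q"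
  obtain v where v: "v \<noteq> 0" "P = pt v" using points_cases P by blast
  obtain w where w: "w \<noteq> 0" "Q = pt w" using points_cases Q by blast
  have "kr v = dlin P" using v(2) dlin_pt[of v] by simp
  also have "\<dots> = dlin Q" by (rule e)
  also have "\<dots> = kr w" using w(2) dlin_pt[of w] by simp
  finally have "kr v = kr w" .
  then have "crs v w = 0" using kr_eq_iff v w by blast
  then show "P = Q" using pt_eq_iff v w by blast
qed

lemma lines_dlin: "pg_lines = dlin ` pg_points"
proof
  show "pg_lines \<subseteq> dlin ` pg_points"
  proof
    fix L assume "L \<in> pg_lines"
    then obtain h where h: "h \<noteq> 0" "L = kr h" using lines_kr[THEN iffD1] by meson
    have "dlin (pt h) = kr h" by (rule dlin_pt)
    then have "L = dlin (pt h)" using h(2) by simp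
    moreover have "pt h \<in> pg_points" by (rule pt_in[OF h(1)])
    ultimately show "L \<in> dlin ` pg_points" by blast
  qed
next
  show "dlin ` pg_points \<subseteq> pg_lines" using dlin_line by blast
qed

lemma sub_dlin: "P \<in> pg_points \<Longrightarrow> Q \<in> pg_points \<Longrightarrow> P \<subseteq> dlin Q \<longleftrightarrow> Q \<subseteq> dlin P"
proof -
  assume P: "P \<in> pg_points" and Q: "Q \<in> pg_points"
  obtain v where v: "v \<noteq> 0" "P = pt v" using points_cases P by blast
  obtain w where w: "w \<noteq> 0" "Q = pt w" using points_cases Q by blast
  show ?thesis using v w dlin_pt pt_sub_kr dot_comm by metis
qed


lemma lines_ptsk: "L \<in> pg_lines \<Longrightarrow> \<exists>h. h \<noteq> 0 \<and> L = kr h"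
  using lines_kr by blast

lemma kr_line: "h \<noteq> 0 \<Longrightarrow> kr h \<in> pg_lines"
  using lines_kr by blast

lemma q_ge2: "CARD('a::{finite,field}) \<ge> 2"
proof -
  have "card {0::'a, 1} = 2" by simp
  moreover have "card {0::'a, 1} \<le> CARD('a)" by (rule card_mono) simp_all
  ultimately show ?thesis by simp
qed

lemma pg_plane: "plane (pg_points :: ('a::{finite,field} ^ 3) set set) (pts ` pg_lines) CARD('a)"
proof
  show "finite (pg_points :: ('a ^ 3) set set)" by (rule finite_points)
  show "card (pg_points :: ('a ^ 3) set set) = CARD('a) * CARD('a) + CARD('a) + 1" by (rule card_points)
  show "b \<subseteq> pg_points" if "b \<in> pts ` (pg_lines :: ('a ^ 3) set set)" for b
    using that unfolding pts_def by auto
  show "card b = CARD('a) + 1" if bL: "b \<in> pts ` (pg_lines :: ('a ^ 3) set set)" for b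
  proof -
    obtain L where L: "L \<in> pg_lines" "b = pts L" using bL by blast
    obtain h where "h \<noteq> 0" "L = kr h" using lines_ptsk[OF L(1)] by blast
    then show ?thesis using L card_line_pts by simp
  qed
  show "card {b \<in> pts ` pg_lines. P \<in> b \<and> Q \<in> b} = 1"
    if P: "P \<in> (pg_points :: ('a ^ 3) set set)" and Q: "Q \<in> pg_points" and PQ: "P \<noteq> Q" for P Q
  proof -
    obtain u where u: "u \<noteq> 0" "P = pt u" using points_cases P by blast
    obtain v where v: "v \<noteq> 0" "Q = pt v" using points_cases Q by blast
    define w where "w = crs u v"
    have w0: "w \<noteq> 0" unfolding w_def using pt_eq_iff u v PQ by blast
    have "{b \<in> pts ` pg_lines. P \<in> b \<and> Q \<in> b} = {pts (kr w)}"
    proof (intro set_eqI iffI)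
      fix b assume "b \<in> {b \<in> pts ` pg_lines. P \<in> b \<and> Q \<in> b}"
      then obtain L where L: "L \<in> pg_lines" "b = pts L" "P \<in> b" "Q \<in> b" by blast
      obtain h where h: "h \<noteq> 0" "L = kr h" using lines_ptsk[OF L(1)] by blast
      have "dotp u h = 0" using L h u ptsk_mem by blast
      moreover have "dotp v h = 0" using L h v ptsk_mem by blast
      ultimately have "crs w h = 0" unfolding w_def by (simp add: bac vec3_zero)
      then have "kr h = kr w" using kr_par[OF w0 _ h(1)] by simp
      then show "b \<in> {pts (kr w)}" using L h by simp
    next
      fix b assume "b \<in> {pts (kr w)}"
      then have b: "b = pts (kr w)" by simp
      have "P \<in> b" using b u(2) ptsk_mem[OF u(1)] unfolding w_def by simp
      moreover have "Q \<in> b" using b v(2) ptsk_mem[OF v(1)] unfolding w_def by simp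
      moreover have "b \<in> pts ` pg_lines" using b kr_line[OF w0] by blast
      ultimately show "b \<in> {b \<in> pts ` pg_lines. P \<in> b \<and> Q \<in> b}" by blast
    qed
    then show ?thesis by simp
  qed
  show "card (b \<inter> c) = 1"
    if b: "b \<in> pts ` (pg_lines :: ('a ^ 3) set set)" and c: "c \<in> pts ` pg_lines" and bc: "b \<noteq> c" for b c
  proof -
    obtain L where L: "L \<in> pg_lines" "b = pts L" using b by blast
    obtain h where h: "h \<noteq> 0" "L = kr h" using lines_ptsk[OF L(1)] by blast
    obtain L' where L': "L' \<in> pg_lines" "c = pts L'" using c by blast
    obtain h' where h': "h' \<noteq> 0" "L' = kr h'" using lines_ptsk[OF L'(1)] by blast
    define w where "w = crs h h'"
    have w0: "w \<noteq> 0" unfolding w_def using kr_eq_iff[OF h(1) h'(1)] bc L L' h h' by auto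
    have "b \<inter> c = {pt w}"
    proof (intro set_eqI iffI)
      fix P assume "P \<in> b \<inter> c"
      then have Pb: "P \<in> pts (kr h)" and Pc: "P \<in> pts (kr h')" using L L' h h' by auto
      obtain x where x: "x \<noteq> 0" "P = pt x" "dotp x h = 0" using ptsk_cases[OF Pb] by blast
      have "dotp x h' = 0" using Pc x ptsk_mem by blast
      then have "crs w x = 0" unfolding w_def using x by (simp add: bac vec3_zero dot_comm)
      then have "pt w = pt x" using pt_eq_iff w0 x by blast
      then show "P \<in> {pt w}" using x by simp
    next
      fix P assume "P \<in> {pt w}"
      then have P: "P = pt w" by simp
      have "dotp w h = 0" "dotp w h' = 0" unfolding w_def by (simp_all add: dot_comm)
      then show "P \<in> b \<inter> c" using P L L' h h' ptsk_mem[OF w0] by simp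
    qed
    then show ?thesis by simp
  qed
  show "card (pts ` (pg_lines :: ('a ^ 3) set set)) = CARD('a) * CARD('a) + CARD('a) + 1"
  proof -
    have "card (pts ` (pg_lines :: ('a ^ 3) set set)) = card (pg_lines :: ('a ^ 3) set set)"
      by (rule card_image[OF pts_inj])
    also have "\<dots> = card (dlin ` (pg_points :: ('a ^ 3) set set))" by (simp add: lines_dlin)
    also have "\<dots> = card (pg_points :: ('a ^ 3) set set)" by (rule card_image[OF dlin_inj])
    finally show ?thesis using card_points by simp
  qed
  show "card {b \<in> pts ` pg_lines. P \<in> b} = CARD('a) + 1" if P: "P \<in> (pg_points :: ('a ^ 3) set set)" for P
  proof -
    obtain v where v: "v \<noteq> 0" "P = pt v" using points_cases P by blast
    have eq: "{b \<in> pts ` pg_lines. P \<in> b} = (pts \<circ> dlin) ` (pts (kr v))"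
    proof (intro set_eqI iffI)
      fix b assume "b \<in> {b \<in> pts ` pg_lines. P \<in> b}"
      then obtain L where L: "L \<in> pg_lines" "b = pts L" "P \<in> b" by blast
      obtain h where h: "h \<noteq> 0" "L = kr h" using lines_ptsk[OF L(1)] by blast
      have "dotp v h = 0" using L h v ptsk_mem by blast
      then have "pt h \<in> pts (kr v)" using ptsk_mem[OF h(1)] by (simp add: dot_comm)
      moreover have "b = (pts \<circ> dlin) (pt h)" using L h dlin_pt[of h] by simp
      ultimately show "b \<in> (pts \<circ> dlin) ` (pts (kr v))" by blast
    next
      fix b assume "b \<in> (pts \<circ> dlin) ` (pts (kr v))"
      then obtain Q where Q: "Q \<in> pts (kr v)" "b = pts (dlin Q)" by auto
      obtain h where h: "h \<noteq> 0" "Q = pt h" "dotp h v = 0" using ptsk_cases[OF Q(1)] by blast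
      have b: "b = pts (kr h)" using Q h dlin_pt[of h] by simp
      have "P \<in> b" using b v(2) h(3) ptsk_mem[OF v(1)] by (simp add: dot_comm)
      moreover have "b \<in> pts ` pg_lines" using b kr_line[OF h(1)] by blast
      ultimately show "b \<in> {b \<in> pts ` pg_lines. P \<in> b}" by blast
    qed
    have sub: "pts (kr v) \<subseteq> pg_points" unfolding pts_def by auto
    have inj: "inj_on (pts \<circ> dlin) (pts (kr v))"
    proof (rule comp_inj_on)
      show "inj_on dlin (pts (kr v))" using dlin_inj sub by (rule inj_on_subset)
      show "inj_on pts (dlin ` pts (kr v))" using pts_inj
      proof (rule inj_on_subset)
        show "dlin ` pts (kr v) \<subseteq> pg_lines" using sub dlin_line by blast
      qed
    qed
    show ?thesis using eq card_image[OF inj] card_line_pts[OF v(1)] by simp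
  qed
  show "2 \<le> CARD('a)" by (rule q_ge2)
qed


lemma sum_card_mult:
  assumes "finite A" "finite F"
  shows "(\<Sum>P\<in>A. card {X\<in>F. P \<in> X} * g P) = (\<Sum>X\<in>F. \<Sum>P\<in>A \<inter> X. g P)"
proof -
  have "(\<Sum>P\<in>A. card {X\<in>F. P \<in> X} * g P) = (\<Sum>P\<in>A. \<Sum>X\<in>F. if P \<in> X then g P else 0)"
  proof (rule sum.cong[OF refl])
    fix P assume "P \<in> A"
    have "(\<Sum>X\<in>F. if P \<in> X then g P else 0) = (\<Sum>X\<in>{X\<in>F. P \<in> X}. g P)"
      using assms(2) by (simp add: sum.If_cases Int_def conj_commute)
    also have "\<dots> = card {X\<in>F. P \<in> X} * g P" by simp
    finally show "card {X\<in>F. P \<in> X} * g P = (\<Sum>X\<in>F. if P \<in> X then g P else 0)" by simp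
  qed
  also have "\<dots> = (\<Sum>X\<in>F. \<Sum>P\<in>A. if P \<in> X then g P else 0)" by (rule sum.swap)
  also have "\<dots> = (\<Sum>X\<in>F. \<Sum>P\<in>A \<inter> X. g P)"
    using assms(1) by (simp add: sum.inter_restrict)
  finally show ?thesis .
qed

lemma two_elems:
  assumes "card S \<ge> 2"
  shows "\<exists>x\<in>S. \<exists>y\<in>S. x \<noteq> y"
proof -
  have fin: "finite S" using assms card.infinite by fastforce
  have "S \<noteq> {}" using assms by auto
  then obtain x where x: "x \<in> S" by blast
  have "card (S - {x}) \<ge> 1" using assms x fin by (simp add: card_Diff_singleton)
  then have "S - {x} \<noteq> {}" by (metis card.empty not_one_le_zero)
  then obtain y where "y \<in> S - {x}" by blast
  then show ?thesis using x by blast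
qed

lemma bundle_deg:
  fixes \<Gamma> :: "('a::{finite,field} ^ 3) set set set"
  assumes B: "projective_bundle \<Gamma>" and P: "P \<in> pg_points"
  shows "card {X\<in>\<Gamma>. P \<in> X} = CARD('a) + 1"
proof -
  let ?q = "CARD('a)"
  let ?Pts = "pg_points :: ('a ^ 3) set set"
  have ov: "\<And>X. X \<in> \<Gamma> \<Longrightarrow> X \<subseteq> ?Pts \<and> card X = ?q + 1"
    using B unfolding projective_bundle_def is_oval_def by blast
  have cG: "card \<Gamma> = ?q * ?q + ?q + 1" using B unfolding projective_bundle_def by (simp add: power2_eq_square)
  have int1: "\<And>X Y. X \<in> \<Gamma> \<Longrightarrow> Y \<in> \<Gamma> \<Longrightarrow> X \<noteq> Y \<Longrightarrow> card (X \<inter> Y) = 1"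
    using B unfolding projective_bundle_def by blast
  have finG: "finite \<Gamma>" using cG card.infinite by fastforce
  have finP: "finite ?Pts" by (rule finite_points)
  have cP: "card ?Pts = ?q * ?q + ?q + 1" by (rule card_points)
  define r where "r Q = card {X\<in>\<Gamma>. Q \<in> X}" for Q
  have finX: "finite X" if "X \<in> \<Gamma>" for X using ov[OF that] finP finite_subset by blast
  have S1: "(\<Sum>Q\<in>?Pts. r Q) = (?q * ?q + ?q + 1) * (?q + 1)"
  proof -
    have "(\<Sum>Q\<in>?Pts. r Q) = (\<Sum>X\<in>\<Gamma>. card (X \<inter> ?Pts))"
      unfolding r_def using dc[OF finP finG] by simp
    also have "\<dots> = (\<Sum>X\<in>\<Gamma>. ?q + 1)"
    proof (rule sum.cong[OF refl])
      fix X assume "X \<in> \<Gamma>" then show "card (X \<inter> ?Pts) = ?q + 1" using ov[of X] by (simp add: Int_absorb2)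
    qed
    finally show ?thesis using cG by simp
  qed
  have S2: "(\<Sum>Q\<in>?Pts. r Q * r Q) = (?q * ?q + ?q + 1) * (?q + 1 + (?q * ?q + ?q))"
  proof -
    have "(\<Sum>Q\<in>?Pts. r Q * r Q) = (\<Sum>X\<in>\<Gamma>. \<Sum>Q\<in>?Pts \<inter> X. r Q)"
      unfolding r_def by (rule sum_card_mult[OF finP finG])
    also have "\<dots> = (\<Sum>X\<in>\<Gamma>. ?q + 1 + (?q * ?q + ?q))"
    proof (rule sum.cong[OF refl])
      fix X assume X: "X \<in> \<Gamma>"
      have PX: "?Pts \<inter> X = X" using ov[OF X] by auto
      have "(\<Sum>Q\<in>X. r Q) = (\<Sum>Y\<in>\<Gamma>. card (Y \<inter> X))"
        unfolding r_def using dc[OF finX[OF X] finG] by simp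
      also have "\<dots> = card (X \<inter> X) + (\<Sum>Y\<in>\<Gamma> - {X}. card (Y \<inter> X))"
        using X finG by (simp add: sum.remove)
      also have "(\<Sum>Y\<in>\<Gamma> - {X}. card (Y \<inter> X)) = (\<Sum>Y\<in>\<Gamma> - {X}. 1)"
        using int1 X by (intro sum.cong) auto
      also have "\<dots> = ?q * ?q + ?q" using X finG cG by (simp add: card_Diff_singleton)
      finally show "(\<Sum>Q\<in>?Pts \<inter> X. r Q) = ?q + 1 + (?q * ?q + ?q)" using PX ov[OF X] by simp
    qed
    finally show ?thesis using cG by simp
  qed
  define c :: int where "c = int ?q + 1"
  have "(\<Sum>Q\<in>?Pts. (int (r Q) - c)^2) = (\<Sum>Q\<in>?Pts. int (r Q * r Q) - 2 * c * int (r Q) + c * c)"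
    by (intro sum.cong) (simp_all add: power2_eq_square algebra_simps)
  also have "\<dots> = int (\<Sum>Q\<in>?Pts. r Q * r Q) - 2 * c * int (\<Sum>Q\<in>?Pts. r Q) + int (card ?Pts) * c * c"
    by (simp add: sum.distrib sum_subtractf sum_distrib_left of_nat_sum)
  also have "\<dots> = 0" unfolding S1 S2 cP c_def by (simp add: algebra_simps)
  finally have z: "(\<Sum>Q\<in>?Pts. (int (r Q) - c)^2) = 0" .
  have "\<forall>Q\<in>?Pts. (int (r Q) - c)^2 = 0"
    using z finP by (subst (asm) sum_nonneg_eq_0_iff) auto
  then have "(int (r P) - c)^2 = 0" using P by blast
  then show ?thesis unfolding c_def r_def by simp
qed

lemma bundle_plane:
  fixes \<Gamma> :: "('a::{finite,field} ^ 3) set set set"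
  assumes B: "projective_bundle \<Gamma>"
  shows "plane (pg_points :: ('a ^ 3) set set) \<Gamma> CARD('a)"
proof -
  let ?q = "CARD('a)"
  let ?Pts = "pg_points :: ('a ^ 3) set set"
  have ov: "\<And>X. X \<in> \<Gamma> \<Longrightarrow> X \<subseteq> ?Pts \<and> card X = ?q + 1"
    using B unfolding projective_bundle_def is_oval_def by blast
  have cG: "card \<Gamma> = ?q * ?q + ?q + 1" using B unfolding projective_bundle_def by (simp add: power2_eq_square)
  have int1: "\<And>X Y. X \<in> \<Gamma> \<Longrightarrow> Y \<in> \<Gamma> \<Longrightarrow> X \<noteq> Y \<Longrightarrow> card (X \<inter> Y) = 1"
    using B unfolding projective_bundle_def by blast
  have finG: "finite \<Gamma>" using cG card.infinite by fastforce
  have finP: "finite ?Pts" by (rule finite_points)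
  have cP: "card ?Pts = ?q * ?q + ?q + 1" by (rule card_points)
  have le1: "card {X\<in>\<Gamma>. P \<in> X \<and> Q \<in> X} \<le> 1" if "P \<noteq> Q" for P Q
  proof (rule ccontr)
    assume "\<not> ?thesis"
    then have "card {X\<in>\<Gamma>. P \<in> X \<and> Q \<in> X} \<ge> 2" by simp
    then obtain X Y where XY: "X \<in> {X\<in>\<Gamma>. P \<in> X \<and> Q \<in> X}" "Y \<in> {X\<in>\<Gamma>. P \<in> X \<and> Q \<in> X}" "X \<noteq> Y"
      using two_elems by blast
    then have "{P, Q} \<subseteq> X \<inter> Y" by auto
    moreover have "finite (X \<inter> Y)" using XY ov finP finite_subset by blast
    ultimately have "card {P,Q} \<le> card (X \<inter> Y)" by (rule card_mono[rotated])
    then show False using int1[of X Y] XY that by simp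
  qed
  show ?thesis
  proof
    show "finite ?Pts" by (rule finP)
    show "card ?Pts = ?q * ?q + ?q + 1" by (rule cP)
    show "b \<subseteq> ?Pts" if "b \<in> \<Gamma>" for b using ov[OF that] by simp
    show "card b = ?q + 1" if "b \<in> \<Gamma>" for b using ov[OF that] by simp
    show "card (b \<inter> c) = 1" if "b \<in> \<Gamma>" "c \<in> \<Gamma>" "b \<noteq> c" for b c using int1 that by blast
    show "card \<Gamma> = ?q * ?q + ?q + 1" by (rule cG)
    show "card {b\<in>\<Gamma>. P \<in> b} = ?q + 1" if "P \<in> ?Pts" for P by (rule bundle_deg[OF B that])
    show "2 \<le> ?q" by (rule q_ge2)
    show "card {b\<in>\<Gamma>. P \<in> b \<and> Q \<in> b} = 1" if P: "P \<in> ?Pts" and Q: "Q \<in> ?Pts" and PQ: "P \<noteq> Q" for P Q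
    proof -
      define F where "F = {X\<in>\<Gamma>. P \<in> X}"
      define A where "A = ?Pts - {P}"
      have finF: "finite F" unfolding F_def using finG by simp
      have finA: "finite A" unfolding A_def using finP by simp
      have "(\<Sum>X\<in>F. card (X \<inter> A)) = (\<Sum>R\<in>A. card {X\<in>F. R \<in> X})" by (rule dc[OF finA finF])
      moreover have "(\<Sum>X\<in>F. card (X \<inter> A)) = (\<Sum>X\<in>F. ?q)"
      proof (rule sum.cong[OF refl])
        fix X assume "X \<in> F"
        then have X: "X \<in> \<Gamma>" "P \<in> X" unfolding F_def by auto
        have "X \<inter> A = X - {P}" unfolding A_def using ov[OF X(1)] by auto
        then show "card (X \<inter> A) = ?q" using ov[OF X(1)] X(2) finP finite_subset
          by (simp add: card_Diff_singleton_if)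
      qed
      moreover have "card F = ?q + 1" unfolding F_def by (rule bundle_deg[OF B P])
      moreover have cA: "card A = ?q * ?q + ?q" unfolding A_def using P finP cP by (simp add: card_Diff_singleton)
      ultimately have s: "(\<Sum>R\<in>A. card {X\<in>F. R \<in> X}) = (?q + 1) * ?q" by simp
      have e: "\<forall>R\<in>A. card {X\<in>F. R \<in> X} = 1"
      proof (rule sum_eq_const_le[OF finA])
        show "\<forall>x\<in>A. card {X\<in>F. x \<in> X} \<le> 1"
        proof
          fix R assume "R \<in> A"
          then have "R \<noteq> P" unfolding A_def by auto
          have "{X\<in>F. R \<in> X} = {X\<in>\<Gamma>. P \<in> X \<and> R \<in> X}" unfolding F_def by auto
          then show "card {X\<in>F. R \<in> X} \<le> 1" using le1[of P R] \<open>R \<noteq> P\<close> by simp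
        qed
        show "1 * card A \<le> (\<Sum>R\<in>A. card {X\<in>F. R \<in> X})" using s cA by (simp add: algebra_simps)
      qed
      have "Q \<in> A" unfolding A_def using Q PQ by auto
      then have "card {X\<in>F. Q \<in> X} = 1" using e by blast
      moreover have "{X\<in>F. Q \<in> X} = {b\<in>\<Gamma>. P \<in> b \<and> Q \<in> b}" unfolding F_def by auto
      ultimately show ?thesis by simp
    qed
  qed
qed


lemma inc_card:
  assumes Ls: "Ls \<subseteq> pg_lines" and P: "P \<in> pg_points"
  shows "card {L\<in>Ls. P \<subseteq> L} = card {b\<in>pts ` Ls. P \<in> b}"
proof -
  have inj: "inj_on pts {L\<in>Ls. P \<subseteq> L}" using pts_inj by (rule inj_on_subset) (use Ls in auto)
  have "{b\<in>pts ` Ls. P \<in> b} = pts ` {L\<in>Ls. P \<subseteq> L}" using P unfolding pts_def by auto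
  then show ?thesis using card_image[OF inj] by simp
qed

lemma meet_eq:
  assumes "X \<subseteq> pg_points"
  shows "meet X L = card (X \<inter> pts L)"
proof -
  have "{P \<in> X. P \<subseteq> L} = X \<inter> pts L" using assms unfolding pts_def by blast
  then show ?thesis unfolding meet_def by simp
qed

lemma tp:
  fixes \<Gamma> :: "('a::{finite,field} ^ 3) set set set"
  assumes B: "projective_bundle \<Gamma>"
  shows "twoplanes (pg_points :: ('a ^ 3) set set) (pts ` pg_lines) \<Gamma> CARD('a)"
  unfolding twoplanes_def twoplanes_axioms_def
proof (intro conjI allI impI)
  show "plane (pg_points :: ('a ^ 3) set set) (pts ` pg_lines) CARD('a)" by (rule pg_plane)
  show "plane (pg_points :: ('a ^ 3) set set) \<Gamma> CARD('a)" by (rule bundle_plane[OF B])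
  fix b c assume b: "b \<in> pts ` (pg_lines :: ('a ^ 3) set set)" and c: "c \<in> \<Gamma>"
  obtain L where L: "L \<in> pg_lines" "b = pts L" using b by blast
  have oc: "is_oval c" using B c unfolding projective_bundle_def by blast
  then have "meet c L \<le> 2" "c \<subseteq> pg_points" using L unfolding is_oval_def by auto
  then have "card (c \<inter> pts L) \<le> 2" using meet_eq[of c L] by simp
  moreover have "b \<inter> c = c \<inter> pts L" using L by blast
  ultimately show "card (b \<inter> c) \<le> 2" by simp
qed


theorem theorem4p13:
  fixes \<Gamma> :: "('a::{finite,field} ^ 3) set set set"
  assumes "projective_bundle \<Gamma>"
  shows "(\<exists>Ls Os. in_code \<Gamma> Ls Os \<and> (Ls, Os) \<noteq> ({}, {}) \<and> weight Ls Os = CARD('a) + 2)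
    \<and> (\<forall>Ls Os. in_code \<Gamma> Ls Os \<and> (Ls, Os) \<noteq> ({}, {}) \<longrightarrow> weight Ls Os \<ge> CARD('a) + 2)
    \<and> (\<forall>Ls Os. in_code \<Gamma> Ls Os \<and> (Ls, Os) \<noteq> ({}, {}) \<and> weight Ls Os = CARD('a) + 2 \<longrightarrow>
         (odd (CARD('a)) \<longrightarrow>
            (\<exists>X \<in> \<Gamma>. Os = {X} \<and> Ls = {L \<in> pg_lines. tangent L X})
          \<or> (\<exists>L \<in> pg_lines. Ls = {L} \<and> Os = {X \<in> \<Gamma>. tangent L X}))
       \<and> (even (CARD('a)) \<longrightarrow>
            (Os = {} \<and> dual_hyperoval Ls) \<or> (Ls = {} \<and> hyperoval_of_ovals \<Gamma> Os)))"
proof -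
  let ?q = "CARD('a)"
  let ?Pts = "pg_points :: ('a ^ 3) set set"
  let ?B1 = "pts ` (pg_lines :: ('a ^ 3) set set)"
  have TP: "twoplanes ?Pts ?B1 \<Gamma> ?q" by (rule tp[OF assms])
  interpret T: twoplanes ?Pts ?B1 \<Gamma> ?q by (rule TP)
  have ovsub: "X \<subseteq> ?Pts" if "X \<in> \<Gamma>" for X
    using assms that unfolding projective_bundle_def is_oval_def by blast
  have tang_iff: "tangent L X \<longleftrightarrow> card (X \<inter> pts L) = 1" if "X \<in> \<Gamma>" for X L
    unfolding tangent_def using meet_eq[OF ovsub[OF that]] by simp
  have tang_set: "{Y\<in>\<Gamma>. card (Y \<inter> pts L) = 1} = {X \<in> \<Gamma>. tangent L X}" for L
    using tang_iff by blast
  have trans: "cwd ?Pts ?B1 \<Gamma> (pts ` Ls) Os \<and> card (pts ` Ls) = card Ls \<and> Ls \<subseteq> pg_lines \<and> Os \<subseteq> \<Gamma>"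
    if ic: "in_code \<Gamma> Ls Os" for Ls Os
  proof -
    have Ls: "Ls \<subseteq> pg_lines" and Os: "Os \<subseteq> \<Gamma>"
      and ev: "\<forall>P\<in>?Pts. even (card {L\<in>Ls. P \<subseteq> L} + card {X\<in>Os. P \<in> X})"
      using ic unfolding in_code_def by auto
    have "\<forall>P\<in>?Pts. even (card {b\<in>pts ` Ls. P \<in> b} + card {X\<in>Os. P \<in> X})"
      using ev inc_card[OF Ls] by simp
    moreover have "pts ` Ls \<subseteq> ?B1" using Ls by blast
    ultimately have "cwd ?Pts ?B1 \<Gamma> (pts ` Ls) Os" unfolding cwd_def using Os by blast
    moreover have "card (pts ` Ls) = card Ls"
      using card_image[OF inj_on_subset[OF pts_inj Ls]] .
    ultimately show ?thesis using Ls Os by blast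
  qed
  have main: "weight Ls Os = ?q + 2
    \<and> (odd ?q \<longrightarrow> (\<exists>X \<in> \<Gamma>. Os = {X} \<and> Ls = {L \<in> pg_lines. tangent L X})
          \<or> (\<exists>L \<in> pg_lines. Ls = {L} \<and> Os = {X \<in> \<Gamma>. tangent L X}))
    \<and> (even ?q \<longrightarrow> (Os = {} \<and> dual_hyperoval Ls) \<or> (Ls = {} \<and> hyperoval_of_ovals \<Gamma> Os))"
    if ic: "in_code \<Gamma> Ls Os" and ne: "(Ls, Os) \<noteq> ({}, {})" and wt: "weight Ls Os \<le> ?q + 2" for Ls Os
  proof -
    have tr: "cwd ?Pts ?B1 \<Gamma> (pts ` Ls) Os" "card (pts ` Ls) = card Ls" "Ls \<subseteq> pg_lines" "Os \<subseteq> \<Gamma>"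
      using trans[OF ic] by auto
    have inj: "inj_on pts Ls" using inj_on_subset[OF pts_inj tr(3)] .
    have ne': "(pts ` Ls, Os) \<noteq> ({}, {})" using ne by auto
    have wt': "card (pts ` Ls) + card Os \<le> ?q + 2" using wt tr(2) unfolding weight_def by simp
    have R: "card (pts ` Ls) + card Os = ?q + 2
      \<and> (odd ?q \<longrightarrow> (\<exists>X\<in>\<Gamma>. Os = {X} \<and> pts ` Ls = {M\<in>?B1. card (M \<inter> X) = 1})
                 \<or> (\<exists>L\<in>?B1. pts ` Ls = {L} \<and> Os = {Y\<in>\<Gamma>. card (Y \<inter> L) = 1}))
      \<and> (even ?q \<longrightarrow> (Os = {} \<and> (\<forall>P\<in>?Pts. card {L\<in>pts ` Ls. P \<in> L} = 0 \<or> card {L\<in>pts ` Ls. P \<in> L} = 2))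
                 \<or> (pts ` Ls = {} \<and> (\<forall>P\<in>?Pts. card {X\<in>Os. P \<in> X} = 0 \<or> card {X\<in>Os. P \<in> X} = 2)))"
      by (rule T.main_abs[OF tr(1) ne' wt'])
    have w: "weight Ls Os = ?q + 2" using R tr(2) unfolding weight_def by simp
    have odd_part: "(\<exists>X \<in> \<Gamma>. Os = {X} \<and> Ls = {L \<in> pg_lines. tangent L X})
          \<or> (\<exists>L \<in> pg_lines. Ls = {L} \<and> Os = {X \<in> \<Gamma>. tangent L X})" if oq: "odd ?q"
    proof -
      have "(\<exists>X\<in>\<Gamma>. Os = {X} \<and> pts ` Ls = {M\<in>?B1. card (M \<inter> X) = 1})
                 \<or> (\<exists>L\<in>?B1. pts ` Ls = {L} \<and> Os = {Y\<in>\<Gamma>. card (Y \<inter> L) = 1})" using R oq by blast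
      then show ?thesis
      proof
        assume "\<exists>X\<in>\<Gamma>. Os = {X} \<and> pts ` Ls = {M\<in>?B1. card (M \<inter> X) = 1}"
        then obtain X where X: "X \<in> \<Gamma>" "Os = {X}" "pts ` Ls = {M\<in>?B1. card (M \<inter> X) = 1}" by blast
        have "Ls = {L \<in> pg_lines. tangent L X}"
        proof (intro set_eqI iffI)
          fix L assume L: "L \<in> Ls"
          then have "pts L \<in> {M\<in>?B1. card (M \<inter> X) = 1}" using X(3) by blast
          then have "card (X \<inter> pts L) = 1" by (simp add: Int_commute)
          then have "meet X L = 1" using meet_eq[OF ovsub[OF X(1)]] by simp
          then show "L \<in> {L \<in> pg_lines. tangent L X}" using L tr(3) unfolding tangent_def by blast
        next
          fix L assume L: "L \<in> {L \<in> pg_lines. tangent L X}"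
          then have "meet X L = 1" "L \<in> pg_lines" unfolding tangent_def by auto
          then have "card (pts L \<inter> X) = 1" using meet_eq[OF ovsub[OF X(1)]] by (simp add: Int_commute)
          then have "pts L \<in> pts ` Ls" using X(3) \<open>L \<in> pg_lines\<close> by blast
          then obtain L' where "L' \<in> Ls" "pts L' = pts L" by blast
          then have "L' = L" using pts_inj tr(3) \<open>L \<in> pg_lines\<close> by (meson inj_on_def subsetD)
          then show "L \<in> Ls" using \<open>L' \<in> Ls\<close> by simp
        qed
        then show ?thesis using X by blast
      next
        assume "\<exists>L\<in>?B1. pts ` Ls = {L} \<and> Os = {Y\<in>\<Gamma>. card (Y \<inter> L) = 1}"
        then obtain L0 where L0: "L0 \<in> pg_lines" "pts ` Ls = {pts L0}" "Os = {Y\<in>\<Gamma>. card (Y \<inter> pts L0) = 1}"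
          by blast
        have "Ls = {L0}"
        proof (intro set_eqI iffI)
          fix L assume "L \<in> Ls"
          then have e: "pts L = pts L0" "L \<in> pg_lines" using L0(2) tr(3) by auto
          have "L = L0" by (rule inj_onD[OF pts_inj e(1) e(2) L0(1)])
          then show "L \<in> {L0}" by simp
        next
          fix L assume "L \<in> {L0}"
          then have "L = L0" by simp
          have "pts L0 \<in> pts ` Ls" using L0(2) by simp
          then obtain L' where "L' \<in> Ls" "pts L' = pts L0" by blast
          then have "L' = L0" using pts_inj tr(3) L0(1) by (meson inj_on_def subsetD)
          then show "L \<in> Ls" using \<open>L' \<in> Ls\<close> \<open>L = L0\<close> by simp
        qed
        moreover have "Os = {X \<in> \<Gamma>. tangent L0 X}"
        proof -
          show ?thesis using L0(3) tang_set[of L0] by simp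
        qed
        ultimately show ?thesis using L0(1) by blast
      qed
    qed
    have even_part: "(Os = {} \<and> dual_hyperoval Ls) \<or> (Ls = {} \<and> hyperoval_of_ovals \<Gamma> Os)" if eq: "even ?q"
    proof -
      have "(Os = {} \<and> (\<forall>P\<in>?Pts. card {L\<in>pts ` Ls. P \<in> L} = 0 \<or> card {L\<in>pts ` Ls. P \<in> L} = 2))
                 \<or> (pts ` Ls = {} \<and> (\<forall>P\<in>?Pts. card {X\<in>Os. P \<in> X} = 0 \<or> card {X\<in>Os. P \<in> X} = 2))"
        using R eq by (elim conjE) (erule mp)
      then show ?thesis
      proof
        assume a: "Os = {} \<and> (\<forall>P\<in>?Pts. card {L\<in>pts ` Ls. P \<in> L} = 0 \<or> card {L\<in>pts ` Ls. P \<in> L} = 2)"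
        have "card Ls = ?q + 2" using w a unfolding weight_def by simp
        moreover have "\<forall>P\<in>?Pts. card {L\<in>Ls. P \<subseteq> L} = 0 \<or> card {L\<in>Ls. P \<subseteq> L} = 2"
        proof
          fix P assume P: "P \<in> ?Pts"
          have "card {L\<in>Ls. P \<subseteq> L} = card {b\<in>pts ` Ls. P \<in> b}" by (rule inc_card[OF tr(3) P])
          then show "card {L\<in>Ls. P \<subseteq> L} = 0 \<or> card {L\<in>Ls. P \<subseteq> L} = 2" using a P by simp
        qed
        ultimately have "dual_hyperoval Ls" unfolding dual_hyperoval_def using tr(3) by (intro conjI)
        then show ?thesis using a by blast
      next
        assume a: "pts ` Ls = {} \<and> (\<forall>P\<in>?Pts. card {X\<in>Os. P \<in> X} = 0 \<or> card {X\<in>Os. P \<in> X} = 2)"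
        then have "Ls = {}" by simp
        then have "card Os = ?q + 2" using w unfolding weight_def by simp
        then have "hyperoval_of_ovals \<Gamma> Os" unfolding hyperoval_of_ovals_def using tr(4) a by (intro conjI) auto
        then show ?thesis using \<open>Ls = {}\<close> by blast
      qed
    qed
    show ?thesis using w odd_part even_part by blast
  qed
  have exist: "\<exists>Ls Os. in_code \<Gamma> Ls Os \<and> (Ls, Os) \<noteq> ({}, {}) \<and> weight Ls Os = ?q + 2"
  proof (cases "odd ?q")
    case True
    define e1 :: "'a ^ 3" where "e1 = vec3 1 0 0"
    have e10: "e1 \<noteq> 0" unfolding e1_def by (simp add: vec3_zero)
    define L0 where "L0 = kr e1"
    have L0: "L0 \<in> pg_lines" unfolding L0_def by (rule kr_line[OF e10])
    have B1L0: "pts L0 \<in> ?B1" using L0 by blast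
    have cw: "cwd ?Pts ?B1 \<Gamma> {pts L0} {Y\<in>\<Gamma>. card (Y \<inter> pts L0) = 1}"
      by (rule T.exist_odd[OF True B1L0])
    have Oseq: "{Y\<in>\<Gamma>. card (Y \<inter> pts L0) = 1} = {X \<in> \<Gamma>. tangent L0 X}"
      by (rule tang_set)
    have aL: "pts L0 \<subseteq> ?Pts" "card (pts L0) = ?q+1" "\<forall>c\<in>\<Gamma>. card (c \<inter> pts L0) \<le> 2"
      using T.arcL[OF B1L0] by auto
    have cO: "card {Y\<in>\<Gamma>. card (Y \<inter> pts L0) = 1} = ?q + 1" by (rule T.p2.tan_card[OF aL])
    have ic: "in_code \<Gamma> {L0} {X \<in> \<Gamma>. tangent L0 X}"
    proof -
      have ev: "\<forall>P\<in>?Pts. even (card {b\<in>{pts L0}. P \<in> b} + card {X\<in>{Y\<in>\<Gamma>. card (Y \<inter> pts L0) = 1}. P \<in> X})"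
        using cw unfolding cwd_def by blast
      have "\<forall>P\<in>?Pts. even (card {L\<in>{L0}. P \<subseteq> L} + card {X\<in>{Y\<in>\<Gamma>. card (Y \<inter> pts L0) = 1}. P \<in> X})"
      proof
        fix P assume P: "P \<in> ?Pts"
        have "card {L\<in>{L0}. P \<subseteq> L} = card {b\<in>pts ` {L0}. P \<in> b}"
          by (rule inc_card) (use L0 P in auto)
        also have "pts ` {L0} = {pts L0}" by simp
        finally have c: "card {L\<in>{L0}. P \<subseteq> L} = card {b\<in>{pts L0}. P \<in> b}" .
        show "even (card {L\<in>{L0}. P \<subseteq> L} + card {X\<in>{Y\<in>\<Gamma>. card (Y \<inter> pts L0) = 1}. P \<in> X})"
          unfolding c using ev P by blast
      qed
      then show ?thesis unfolding in_code_def Oseq[symmetric] using L0 by auto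
    qed
    have "weight {L0} {X \<in> \<Gamma>. tangent L0 X} = ?q + 2" unfolding weight_def using cO Oseq by simp
    then show ?thesis using ic by blast
  next
    case False
    then have evq: "even ?q" by simp
    have "card \<Gamma> \<noteq> 0" using T.p2.cardB by simp
    then obtain X0 where X0: "X0 \<in> \<Gamma>" by (metis card.empty ex_in_conv)
    have aX: "X0 \<subseteq> ?Pts" "card X0 = ?q+1" "\<forall>b\<in>?B1. card (b \<inter> X0) \<le> 2" using T.arcX[OF X0] by auto
    obtain H where H: "H \<subseteq> ?Pts" "card H = ?q + 2" "\<forall>b\<in>?B1. card (b \<inter> H) = 0 \<or> card (b \<inter> H) = 2"
      using T.p1.hyperoval[OF aX evq] by blast
    have injH: "inj_on dlin H" using inj_on_subset[OF dlin_inj H(1)] .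
    have Lsub: "dlin ` H \<subseteq> pg_lines" using H(1) dlin_line by blast
    have cL: "card (dlin ` H) = ?q + 2" using card_image[OF injH] H(2) by simp
    have ev: "even (card {L\<in>dlin ` H. P \<subseteq> L} + card {X\<in>{}. P \<in> X})" if P: "P \<in> ?Pts" for P
    proof -
      have inj2: "inj_on dlin {Q\<in>H. P \<subseteq> dlin Q}" using injH by (rule inj_on_subset) auto
      have "{L\<in>dlin ` H. P \<subseteq> L} = dlin ` {Q\<in>H. P \<subseteq> dlin Q}" by auto
      then have "card {L\<in>dlin ` H. P \<subseteq> L} = card {Q\<in>H. P \<subseteq> dlin Q}" using card_image[OF inj2] by simp
      also have "{Q\<in>H. P \<subseteq> dlin Q} = pts (dlin P) \<inter> H"
        using sub_dlin P H(1) unfolding pts_def by blast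
      finally have c: "card {L\<in>dlin ` H. P \<subseteq> L} = card (pts (dlin P) \<inter> H)" .
      have "pts (dlin P) \<in> ?B1" using dlin_line[OF P] by blast
      then have "card (pts (dlin P) \<inter> H) = 0 \<or> card (pts (dlin P) \<inter> H) = 2" using H(3) by blast
      then show ?thesis using c by auto
    qed
    have ic: "in_code \<Gamma> (dlin ` H) {}" unfolding in_code_def using Lsub ev by blast
    have "dlin ` H \<noteq> {}" using cL by auto
    moreover have "weight (dlin ` H) {} = ?q + 2" unfolding weight_def using cL by simp
    ultimately show ?thesis using ic by blast
  qed
  have lower: "\<forall>Ls Os. in_code \<Gamma> Ls Os \<and> (Ls, Os) \<noteq> ({}, {}) \<longrightarrow> weight Ls Os \<ge> ?q + 2"
  proof (intro allI impI)
    fix Ls Os assume a: "in_code \<Gamma> Ls Os \<and> (Ls, Os) \<noteq> ({}, {})"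
    show "weight Ls Os \<ge> ?q + 2"
    proof (rule ccontr)
      assume "\<not> weight Ls Os \<ge> ?q + 2"
      then have "weight Ls Os \<le> ?q + 2" by simp
      then have "weight Ls Os = ?q + 2" using main a by blast
      then show False using \<open>\<not> weight Ls Os \<ge> ?q + 2\<close> by simp
    qed
  qed
  have struct: "\<forall>Ls Os. in_code \<Gamma> Ls Os \<and> (Ls, Os) \<noteq> ({}, {}) \<and> weight Ls Os = CARD('a) + 2 \<longrightarrow>
         (odd (CARD('a)) \<longrightarrow>
            (\<exists>X \<in> \<Gamma>. Os = {X} \<and> Ls = {L \<in> pg_lines. tangent L X})
          \<or> (\<exists>L \<in> pg_lines. Ls = {L} \<and> Os = {X \<in> \<Gamma>. tangent L X}))
       \<and> (even (CARD('a)) \<longrightarrow>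
            (Os = {} \<and> dual_hyperoval Ls) \<or> (Ls = {} \<and> hyperoval_of_ovals \<Gamma> Os))"
  proof (intro allI impI)
    fix Ls Os assume a: "in_code \<Gamma> Ls Os \<and> (Ls, Os) \<noteq> ({}, {}) \<and> weight Ls Os = CARD('a) + 2"
    then have "weight Ls Os \<le> ?q + 2" by simp
    then show "(odd (CARD('a)) \<longrightarrow>
            (\<exists>X \<in> \<Gamma>. Os = {X} \<and> Ls = {L \<in> pg_lines. tangent L X})
          \<or> (\<exists>L \<in> pg_lines. Ls = {L} \<and> Os = {X \<in> \<Gamma>. tangent L X}))
       \<and> (even (CARD('a)) \<longrightarrow>
            (Os = {} \<and> dual_hyperoval Ls) \<or> (Ls = {} \<and> hyperoval_of_ovals \<Gamma> Os))"
      using main a by blast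
  qed
  show ?thesis using exist lower struct by blast
qed


end
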